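(* Let $m>n$ be positive integers. (a) There is a functor $F:\mathfrak T_{iso}\to\mathfrak S([X\times\mathbb Z])$ such that for $\alpha\in\Delta_{iso}$, $F(\alpha)=\{[\lambda,j]: j\in\mathbb Z,\ \lambda\in X_{\nu^j\alpha}\}$ and $F(\rho_\alpha)[\lambda,j]=[t_{\nu^j\alpha}(\lambda),j]$ for $\lambda\in X_{\nu^j\alpha}$. (b) There is a functor $B:\mathfrak T_{iso}\to\mathfrak S([\mathcal B^\circ\times\mathbb Z])$ such that for $\alpha\in\Delta_{iso}$, $B(\alpha)=\{[\mathfrak b,j]: j\in\mathbb Z,\ \mathfrak b\in\mathcal B^\circ(\nu^j\alpha)\}$ and $B(\rho_\alpha)[\mathfrak b,j]=[r_{\nu^j\alpha}(\mathfrak b),j]$ for $\mathfrak b\in\mathcal B^\circ(\nu^j\alpha)$. (c) The map $[\zeta(\sigma),k]\mapsto[\mathfrak b^\circ(\sigma),k]$ is a well-defined bijection $[X\times\mathbb Z]\to[\mathcal B^\circ\times\mathbb Z]$ which carries $F(\alpha)$ onto $B(\alpha)$ and intertwines $F(\rho_\alpha)$ with $B(\rho_\alpha)$ for every $\alpha\in\Delta_{iso}$.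
   Context: Roots: $\Delta_1^+=\{\epsilon_i-\delta_j\}$, $\Delta_{iso}=\pm\Delta_1^+$; $\nu(\pm(\epsilon_i-\delta_j))=\pm(\epsilon_{i+1}-\delta_j)$ with $\epsilon$-indices mod $n$ in $\{1,\dots,n\}$. $\mathfrak T_{iso}$: groupoid with objects $\Delta_{iso}$ and non-identity morphisms $\rho_\alpha:\alpha\to-\alpha$; $\mathfrak S(V)$: groupoid of subsets of $V$ and bijections between them. Young diagrams: $X$ = partitions $\lambda=(\lambda_1\ge\dots\ge\lambda_n\ge0)$, $\lambda_1\le m$, drawn in an $n\times m$ rectangle with rows $\epsilon_1,\dots,\epsilon_n$ top to bottom and columns $\delta_1,\dots,\delta_m$; $\lambda$ consists of boxes $\epsilon_i-\delta_j$ with $j\le\lambda_{n+1-i}$. For $\alpha\in\Delta_1^+$, $X_\alpha$ (resp. $X_{-\alpha}$) is the set of $\lambda$ for which box $\alpha$ is an outer (resp. inner) corner, $t_\alpha$ adds and $t_{-\alpha}$ removes that box. For $\lambda_1=m$, $\overline\lambda=(\lambda_2,\dots,\lambda_n,0)$. $[X\times\mathbb Z]$ is the set of classes of the smallest equivalence relation with $(\lambda,k)\sim(\overline\lambda,k+1)$ whenever $\lambda_1=m$. Shuffles and Borels: $I=\{1,\dots,n,1',\dots,m'\}$, $\epsilon_{j'}:=\delta_j$; a shuffle is a permutation $\sigma$ of $I$ whose one-line notation $(\sigma(1),\dots,\sigma(n),\sigma(1'),\dots,\sigma(m'))$ has $1,\dots,n$ and $1',\dots,m'$ as increasing subsequences.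 $\mathfrak b^\circ(\sigma)$ is the Borel subalgebra of $\mathfrak{gl}(n|m)$ containing the diagonal matrices whose simple roots are $\epsilon_{u}-\epsilon_{v}$ for consecutive entries $u,v$ of the one-line notation; $\mathcal B^\circ=\{\mathfrak b^\circ(\sigma)\}$. $\zeta(\sigma)\in X$: the boxes below the lattice path from top-left to bottom-right whose $k$-th step is down if the $k$-th entry of $\sigma$ is unprimed and right otherwise ($\zeta$ is a bijection). For $\alpha=\epsilon_i-\delta_j$, $\mathcal B^\circ(\alpha)$ (resp. $\mathcal B^\circ(-\alpha)$) is the set of $\mathfrak b^\circ(\sigma)$ in which $i$ immediately precedes (resp. follows) $j'$, and $r_{\pm\alpha}(\mathfrak b^\circ(\sigma))=\mathfrak b^\circ((i,j')\sigma)$ (interchange $i,j'$; this is the odd reflection). For $\sigma$ with last entry $n$, $\overline\sigma$ has one-line notation $1$ followed by $\nu^{-1}$ applied to the first $m+n-1$ entries of $\sigma$, where $\nu^{-1}(k)=k+1$ ($k<n$), $\nu^{-1}(n)=1$, $\nu^{-1}$ fixes primed entries. $[\mathcal B^\circ\times\mathbb Z]$ is the set of classes of the smallest equivalence relation with $(\mathfrak b^\circ(\sigma),k)\sim(\mathfrak b^\circ(\overline\sigma),k+1)$ whenever $\sigma$ has last entry $n$. *)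

theory Defs
  imports Complex_Main
begin

text \<open>A root is encoded as (s,i,j) with s = True for eps_i - delta_j and
  s = False for -(eps_i - delta_j).\<close>

type_synonym root = "bool \<times> nat \<times> nat"

definition Delta_iso :: "nat \<Rightarrow> nat \<Rightarrow> root set" where
  "Delta_iso n m = {(s,i,j). 1 \<le> i \<and> i \<le> n \<and> 1 \<le> j \<and> j \<le> m}"

fun neg_root :: "root \<Rightarrow> root" where
  "neg_root (s,i,j) = (\<not> s, i, j)"

fun nu :: "nat \<Rightarrow> root \<Rightarrow> root" where
  "nu n (s,i,j) = (s, if i < n then i + 1 else 1, j)"

fun nu_inv :: "nat \<Rightarrow> root \<Rightarrow> root" where
  "nu_inv n (s,i,j) = (s, if 1 < i then i - 1 else n, j)"

definition nu_pow :: "nat \<Rightarrow> int \<Rightarrow> root \<Rightarrow> root" where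
  "nu_pow n k = (if 0 \<le> k then nu n ^^ nat k else nu_inv n ^^ nat (- k))"

text \<open>T_iso has objects Delta_iso, identities, and rho_alpha : alpha -> -alpha
  (so rho_(-alpha) o rho_alpha = id_alpha). A functor to S(V) is given by
  subsets Fo alpha of V and bijections Fm alpha : Fo alpha -> Fo (-alpha)
  (the images of rho_alpha), compatible with the composition law.\<close>

definition Tiso_functor ::
  "root set \<Rightarrow> 'v set \<Rightarrow> (root \<Rightarrow> 'v set) \<Rightarrow> (root \<Rightarrow> 'v \<Rightarrow> 'v) \<Rightarrow> bool" where
  "Tiso_functor D V Fo Fm \<longleftrightarrow>
     (\<forall>\<alpha>\<in>D. Fo \<alpha> \<subseteq> V \<and> bij_betw (Fm \<alpha>) (Fo \<alpha>) (Fo (neg_root \<alpha>))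
        \<and> (\<forall>c\<in>Fo \<alpha>. Fm (neg_root \<alpha>) (Fm \<alpha> c) = c))"

definition eqcl :: "'a set \<Rightarrow> ('a \<times> 'a) set \<Rightarrow> ('a \<times> 'a) set" where
  "eqcl A R = Id_on A \<union> (R \<union> R\<inverse>)\<^sup>+"

text \<open>A partition lambda = (lambda_1 >= ... >= lambda_n) is the list
  [lambda_1, ..., lambda_n]; lambda_k = lam ! (k - 1).\<close>

definition Xset :: "nat \<Rightarrow> nat \<Rightarrow> nat list set" where
  "Xset n m = {lam. length lam = n \<and> sorted_wrt (\<ge>) lam \<and> (\<forall>x\<in>set lam. x \<le> m)}"

text \<open>Box eps_i - delta_j is (i,j); it lies in lambda iff j \<le> lambda_(n+1-i).\<close>
definition boxes :: "nat \<Rightarrow> nat list \<Rightarrow> (nat \<times> nat) set" where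
  "boxes n lam = {(i,j). 1 \<le> i \<and> i \<le> n \<and> 1 \<le> j \<and> j \<le> lam ! (n - i)}"

fun Xc :: "nat \<Rightarrow> nat \<Rightarrow> root \<Rightarrow> nat list set" where
  "Xc n m (True,i,j) = {lam \<in> Xset n m. (i,j) \<notin> boxes n lam \<and>
       (\<exists>\<mu>\<in>Xset n m. boxes n \<mu> = insert (i,j) (boxes n lam))}"
| "Xc n m (False,i,j) = {lam \<in> Xset n m. (i,j) \<in> boxes n lam \<and>
       (\<exists>\<mu>\<in>Xset n m. boxes n \<mu> = boxes n lam - {(i,j)})}"

fun t_op :: "nat \<Rightarrow> root \<Rightarrow> nat list \<Rightarrow> nat list" where
  "t_op n (True,i,j) lam = lam[n - i := lam ! (n - i) + 1]"
| "t_op n (False,i,j) lam = lam[n - i := lam ! (n - i) - 1]"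

definition lam_bar :: "nat list \<Rightarrow> nat list" where
  "lam_bar lam = tl lam @ [0]"

definition XZ_rel :: "nat \<Rightarrow> nat \<Rightarrow> ((nat list \<times> int) \<times> (nat list \<times> int)) set" where
  "XZ_rel n m = eqcl (Xset n m \<times> UNIV)
     {((lam,k),(lam_bar lam, k + 1)) | lam k. lam \<in> Xset n m \<and> lam ! 0 = m}"

definition XZ :: "nat \<Rightarrow> nat \<Rightarrow> (nat list \<times> int) set set" where
  "XZ n m = (Xset n m \<times> UNIV) // XZ_rel n m"

definition clsX :: "nat \<Rightarrow> nat \<Rightarrow> nat list \<times> int \<Rightarrow> (nat list \<times> int) set" where
  "clsX n m x = XZ_rel n m `` {x}"

definition Fobj :: "nat \<Rightarrow> nat \<Rightarrow> root \<Rightarrow> (nat list \<times> int) set set" where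
  "Fobj n m \<alpha> = {clsX n m (lam, j) | lam j. lam \<in> Xc n m (nu_pow n j \<alpha>)}"

text \<open>I = {1..n} \<union> {1'..m'} is encoded by Inl k (= k) and Inr j (= j').
  A shuffle is represented by its one-line notation (a list).\<close>

type_synonym idx = "nat + nat"

definition Iset :: "nat \<Rightarrow> nat \<Rightarrow> idx set" where
  "Iset n m = Inl ` {1..n} \<union> Inr ` {1..m}"

definition shuffle_set :: "nat \<Rightarrow> nat \<Rightarrow> idx list set" where
  "shuffle_set n m = {\<sigma>. distinct \<sigma> \<and> set \<sigma> = Iset n m \<and>
      filter isl \<sigma> = map Inl [1..<n+1] \<and>
      filter (\<lambda>x. \<not> isl x) \<sigma> = map Inr [1..<m+1]}"

definition precedes :: "idx list \<Rightarrow> idx \<Rightarrow> idx \<Rightarrow> bool" where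
  "precedes \<sigma> u v \<longleftrightarrow> (\<exists>k l. k < l \<and> l < length \<sigma> \<and> \<sigma> ! k = u \<and> \<sigma> ! l = v)"

text \<open>gl(n|m) realised as complex matrices indexed by I x I. The Borel
  subalgebra b(sigma): diagonal matrices plus the root spaces E_uv of the
  positive roots eps_u - eps_v, i.e. u before v in the one-line notation
  (these are generated by the simple roots of consecutive entries).\<close>

type_synonym mat = "idx \<Rightarrow> idx \<Rightarrow> complex"

definition borel :: "idx list \<Rightarrow> mat set" where
  "borel \<sigma> = {A. \<forall>u v. A u v \<noteq> 0 \<longrightarrow> u \<in> set \<sigma> \<and> v \<in> set \<sigma> \<and> (u = v \<or> precedes \<sigma> u v)}"

definition Bset :: "nat \<Rightarrow> nat \<Rightarrow> mat set set" where
  "Bset n m = borel ` shuffle_set n m"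

definition imm_prec :: "idx list \<Rightarrow> idx \<Rightarrow> idx \<Rightarrow> bool" where
  "imm_prec \<sigma> u v \<longleftrightarrow> (\<exists>k. k + 1 < length \<sigma> \<and> \<sigma> ! k = u \<and> \<sigma> ! (k + 1) = v)"

fun Bc :: "nat \<Rightarrow> nat \<Rightarrow> root \<Rightarrow> mat set set" where
  "Bc n m (True,i,j) = {borel \<sigma> | \<sigma>. \<sigma> \<in> shuffle_set n m \<and> imm_prec \<sigma> (Inl i) (Inr j)}"
| "Bc n m (False,i,j) = {borel \<sigma> | \<sigma>. \<sigma> \<in> shuffle_set n m \<and> imm_prec \<sigma> (Inr j) (Inl i)}"

definition swap_ij :: "nat \<Rightarrow> nat \<Rightarrow> idx list \<Rightarrow> idx list" where
  "swap_ij i j \<sigma> = map (\<lambda>x. if x = Inl i then Inr j else if x = Inr j then Inl i else x) \<sigma>"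

fun r_op :: "nat \<Rightarrow> nat \<Rightarrow> root \<Rightarrow> mat set \<Rightarrow> mat set" where
  "r_op n m (s,i,j) b =
     (THE b'. \<exists>\<sigma>\<in>shuffle_set n m. b = borel \<sigma> \<and> b' = borel (swap_ij i j \<sigma>))"

fun nu_inv_idx :: "nat \<Rightarrow> idx \<Rightarrow> idx" where
  "nu_inv_idx n (Inl k) = Inl (if k < n then k + 1 else 1)"
| "nu_inv_idx n (Inr j) = Inr j"

definition sigma_bar :: "nat \<Rightarrow> idx list \<Rightarrow> idx list" where
  "sigma_bar n \<sigma> = Inl 1 # map (nu_inv_idx n) (butlast \<sigma>)"

definition BZ_rel :: "nat \<Rightarrow> nat \<Rightarrow> ((mat set \<times> int) \<times> (mat set \<times> int)) set" where
  "BZ_rel n m = eqcl (Bset n m \<times> UNIV)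
     {((borel \<sigma>, k), (borel (sigma_bar n \<sigma>), k + 1)) | \<sigma> k.
        \<sigma> \<in> shuffle_set n m \<and> last \<sigma> = Inl n}"

definition BZ :: "nat \<Rightarrow> nat \<Rightarrow> (mat set \<times> int) set set" where
  "BZ n m = (Bset n m \<times> UNIV) // BZ_rel n m"

definition clsB :: "nat \<Rightarrow> nat \<Rightarrow> mat set \<times> int \<Rightarrow> (mat set \<times> int) set" where
  "clsB n m x = BZ_rel n m `` {x}"

definition Bobj :: "nat \<Rightarrow> nat \<Rightarrow> root \<Rightarrow> (mat set \<times> int) set set" where
  "Bobj n m \<alpha> = {clsB n m (b, j) | b j. b \<in> Bc n m (nu_pow n j \<alpha>)}"

text \<open>Row i of the rectangle contains, below the lattice path, the boxes in
  columns 1..c_i where c_i = number of primed entries before i; so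
  lambda_(n+1-i) = c_i, i.e. lambda_k = c_(n+1-k).\<close>
definition zeta :: "nat \<Rightarrow> idx list \<Rightarrow> nat list" where
  "zeta n \<sigma> = map (\<lambda>k. length (filter (\<lambda>x. \<not> isl x) (takeWhile (\<lambda>x. x \<noteq> Inl (n + 1 - k)) \<sigma>)))
                   [1..<n+1]"

end

theory Submission
  imports Defs
begin


section \<open>Roots\<close>

lemma mod_succ_int: "0 < (n::int) \<Longrightarrow> (a+1) mod n = (if a mod n + 1 = n then 0 else a mod n + 1)"
  by (smt (verit, best) mod_add_right_eq mod_self pos_mod_bound pos_mod_sign zmod_trivial_iff)

lemma mod_pred_int: "0 < (n::int) \<Longrightarrow> (a - 1) mod n = (if a mod n = 0 then n - 1 else a mod n - 1)"
  by (smt (verit, best) mod_diff_eq mod_pos_pos_trivial pos_mod_bound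
    pos_mod_sign zmod_minus1)

definition rowf :: "nat \<Rightarrow> nat \<Rightarrow> int \<Rightarrow> nat" where
  "rowf n i k = nat ((int i - 1 + k) mod int n) + 1"

lemma rowf_bounds: "0 < n \<Longrightarrow> 1 \<le> rowf n i k \<and> rowf n i k \<le> n"
  unfolding rowf_def
  by (smt (verit) int_nat_eq nat_int nat_less_iff of_nat_0_less_iff pos_mod_bound pos_mod_sign
      Suc_eq_plus1 Suc_leI le_add2)

lemma rowf_succ: "0 < n \<Longrightarrow> rowf n i (k+1) = (if rowf n i k < n then rowf n i k + 1 else 1)"
proof -
  assume n: "0 < n"
  let ?a = "int i - 1 + k"
  have e: "int i - 1 + (k+1) = ?a + 1" by simp
  have "(?a+1) mod int n = (if ?a mod int n + 1 = int n then 0 else ?a mod int n + 1)"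
    using mod_succ_int[of "int n" ?a] n by simp
  moreover have "0 \<le> ?a mod int n" "?a mod int n < int n" using n by auto
  ultimately show ?thesis unfolding rowf_def e by (auto simp: nat_add_distrib)
qed

lemma rowf_pred: "0 < n \<Longrightarrow> rowf n i (k-1) = (if 1 < rowf n i k then rowf n i k - 1 else n)"
proof -
  assume n: "0 < n"
  let ?a = "int i - 1 + k"
  have e: "int i - 1 + (k-1) = ?a - 1" by simp
  have "(?a - 1) mod int n = (if ?a mod int n = 0 then int n - 1 else ?a mod int n - 1)"
    using mod_pred_int[of "int n" ?a] n by simp
  moreover have "0 \<le> ?a mod int n" "?a mod int n < int n" using n by auto
  ultimately show ?thesis unfolding rowf_def e by (auto simp: nat_diff_distrib)
qed

lemma rowf_0: "0 < n \<Longrightarrow> 1 \<le> i \<Longrightarrow> i \<le> n \<Longrightarrow> rowf n i 0 = i"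
  unfolding rowf_def by simp

lemma nu_pow_formula:
  assumes n: "0 < n" and i: "1 \<le> i" "i \<le> n"
  shows "nu_pow n k (s,i,j) = (s, rowf n i k, j)"
proof (cases "0 \<le> k")
  case True
  have "(nu n ^^ t) (s,i,j) = (s, rowf n i (int t), j)" for t
  proof (induction t)
    case 0 then show ?case using rowf_0[OF n i] by simp
  next
    case (Suc t)
    have "rowf n i (int (Suc t)) = rowf n i (int t + 1)" by (simp add: add.commute)
    then show ?case using Suc rowf_succ[OF n, of i "int t"] by simp
  qed
  then show ?thesis using True unfolding nu_pow_def by simp
next
  case False
  have "(nu_inv n ^^ t) (s,i,j) = (s, rowf n i (- int t), j)" for t
  proof (induction t)
    case 0 then show ?case using rowf_0[OF n i] by simp
  next
    case (Suc t)
    have "- int (Suc t) = - int t - 1" by simp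
    then have "rowf n i (- int (Suc t)) = rowf n i (- int t - 1)" by (simp only:)
    then show ?case using Suc rowf_pred[OF n, of i "- int t"] by simp
  qed
  then show ?thesis using False unfolding nu_pow_def by simp
qed

lemma Delta_iso_iff: "(s,i,j) \<in> Delta_iso n m \<longleftrightarrow> 1 \<le> i \<and> i \<le> n \<and> 1 \<le> j \<and> j \<le> m"
  unfolding Delta_iso_def by auto

lemma nu_pow_succ:
  assumes "0 < n" "(s,i,j) \<in> Delta_iso n m"
  shows "nu_pow n (k+1) (s,i,j) = nu n (nu_pow n k (s,i,j))"
  using assms rowf_succ[of n i k] rowf_bounds[of n i k]
  by (simp add: nu_pow_formula Delta_iso_iff)

lemma nu_pow_neg:
  assumes "0 < n" "(s,i,j) \<in> Delta_iso n m"
  shows "nu_pow n k (neg_root (s,i,j)) = neg_root (nu_pow n k (s,i,j))"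
  using assms by (simp add: nu_pow_formula Delta_iso_iff)



section \<open>Young diagram side\<close>

lemma transp_ge_nat: "transp (\<lambda>x y::nat. x \<ge> y)" by (auto simp: transp_def)

lemma Xset_char: "lam \<in> Xset n m \<longleftrightarrow> length lam = n \<and> (\<forall>k. Suc k < n \<longrightarrow> lam!(Suc k) \<le> lam!k)
   \<and> (\<forall>k<n. lam!k \<le> m)"
  unfolding Xset_def
  by (auto simp: sorted_wrt_iff_nth_Suc_transp[OF transp_ge_nat] all_set_conv_all_nth)

lemma boxes_row: "1 \<le> i \<Longrightarrow> i \<le> n \<Longrightarrow> {j. (i,j) \<in> boxes n lam} = {1..lam!(n-i)}"
  by (auto simp: boxes_def)

lemma boxes_eq: assumes "length a = n" "length b = n" "boxes n a = boxes n b" shows "a = b"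
proof (rule nth_equalityI)
  show "length a = length b" using assms by simp
  fix k assume k: "k < length a"
  have i: "1 \<le> n-k" "n-k \<le> n" using k assms by auto
  have nk: "n-(n-k) = k" using k assms by simp
  have Ea: "{j. (n-k, j) \<in> boxes n a} = {1..a!k}" using boxes_row[OF i, of a] unfolding nk .
  have Eb: "{j. (n-k, j) \<in> boxes n b} = {1..b!k}" using boxes_row[OF i, of b] unfolding nk .
  have E: "{1..a!k} = {1..b!k}" using Ea Eb assms(3) by metis
  from arg_cong[OF E, of card] show "a!k = b!k" by simp
qed

lemma boxes_upd: "length lam = n \<Longrightarrow> 1 \<le> i \<Longrightarrow> i \<le> n \<Longrightarrow>
  boxes n (lam[n-i := v]) = {(r,j'). (r,j') \<in> boxes n lam \<and> r \<noteq> i} \<union> {(i,j') | j'. 1 \<le> j' \<and> j' \<le> v}"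
proof -
  assume a: "length lam = n" "1 \<le> i" "i \<le> n"
  show ?thesis
  proof (rule set_eqI, clarify)
    fix r j'
    show "((r,j') \<in> boxes n (lam[n-i := v])) = ((r,j') \<in> {(r,j'). (r,j') \<in> boxes n lam \<and> r \<noteq> i} \<union> {(i,j') | j'. 1 \<le> j' \<and> j' \<le> v})"
    proof (cases "r = i")
      case True then show ?thesis using a by (auto simp: boxes_def)
    next
      case False
      then have "1 \<le> r \<Longrightarrow> r \<le> n \<Longrightarrow> n - i \<noteq> n - r" using a by auto
      then show ?thesis using a False by (auto simp: boxes_def)
    qed
  qed
qed

lemma updT_X:
  assumes h: "lam \<in> Xset n m \<and> 1 \<le> i \<and> i \<le> n \<and> j = lam!(n-i) + 1 \<and> j \<le> m \<and> (i < n \<longrightarrow> j \<le> lam!(n-i-1))"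
  shows "lam[n-i := j] \<in> Xset n m"
proof -
  from h have X: "lam \<in> Xset n m" and i: "1 \<le> i" "i \<le> n" and jv: "j = lam!(n-i) + 1" and jm: "j \<le> m"
    and jn: "i < n \<longrightarrow> j \<le> lam!(n-i-1)" by auto
  have ln: "length lam = n" using X by (simp add: Xset_def)
  show ?thesis
    unfolding Xset_char
  proof (intro conjI allI impI)
    show "length (lam[n-i := j]) = n" using ln by simp
  next
    fix k assume k: "Suc k < n"
    show "lam[n-i := j] ! Suc k \<le> lam[n-i := j] ! k"
    proof (cases "k = n-i")
      case True then show ?thesis using X k ln jv unfolding Xset_char by (auto simp: nth_list_update)
    next
      case False
      show ?thesis
      proof (cases "Suc k = n-i")
        case True
        then have "i < n" "k = n-i-1" using i by auto
        then show ?thesis using jn True False ln k by (auto simp: nth_list_update)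
      next
        case False2: False
        then show ?thesis using False X k ln unfolding Xset_char by (auto simp: nth_list_update)
      qed
    qed
  next
    fix k assume k: "k < n"
    show "lam[n-i := j] ! k \<le> m" using X k ln jm unfolding Xset_char by (cases "k = n-i") auto
  qed
qed

lemma XcT_char: "lam \<in> Xc n m (True,i,j) \<longleftrightarrow> lam \<in> Xset n m \<and> 1 \<le> i \<and> i \<le> n \<and>
   j = lam!(n-i) + 1 \<and> j \<le> m \<and> (i < n \<longrightarrow> j \<le> lam!(n-i-1))"
proof
  assume h: "lam \<in> Xc n m (True,i,j)"
  then obtain \<mu> where X: "lam \<in> Xset n m" and nb: "(i,j) \<notin> boxes n lam" and mu: "\<mu> \<in> Xset n m"
    and bm: "boxes n \<mu> = insert (i,j) (boxes n lam)" by auto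
  have "(i,j) \<in> boxes n \<mu>" using bm by auto
  then have i: "1 \<le> i" "i \<le> n" and j1: "1 \<le> j" by (auto simp: boxes_def)
  have ln: "length lam = n" "length \<mu> = n" using X mu by (auto simp: Xset_def)
  have "{j'. (i,j') \<in> boxes n \<mu>} = insert j {j'. (i,j') \<in> boxes n lam}" using bm by auto
  then have row: "{1..\<mu>!(n-i)} = insert j {1..lam!(n-i)}" using boxes_row[OF i] by simp
  have jn: "j \<notin> {1..lam!(n-i)}" using nb i j1 by (auto simp: boxes_def)
  have "card {1..\<mu>!(n-i)} = card (insert j {1..lam!(n-i)})" using row by simp
  then have c: "\<mu>!(n-i) = lam!(n-i) + 1" using jn by simp
  have "j \<in> {1..\<mu>!(n-i)}" using row by auto
  then have jv: "j = lam!(n-i) + 1" using jn c by auto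
  have "boxes n \<mu> = boxes n (lam[n-i := j])"
    unfolding bm using boxes_upd[OF ln(1) i, of j] jv
    by (auto simp: boxes_def)
  then have mu_eq: "\<mu> = lam[n-i := j]" using boxes_eq[of \<mu> n "lam[n-i := j]"] ln by simp
  have "j \<le> m" using mu ln i unfolding Xset_char mu_eq by (metis diff_less le_less_trans less_numeral_extra(1) nth_list_update_eq zero_less_diff linorder_not_le)
  moreover have "i < n \<longrightarrow> j \<le> lam!(n-i-1)"
  proof
    assume "i < n"
    then have "Suc (n-i-1) < n" "n-i-1 \<noteq> n-i" "Suc (n-i-1) = n-i" using i by auto
    then show "j \<le> lam!(n-i-1)" using mu ln unfolding Xset_char mu_eq
      by (metis nth_list_update_eq nth_list_update_neq)
  qed
  ultimately show "lam \<in> Xset n m \<and> 1 \<le> i \<and> i \<le> n \<and> j = lam!(n-i) + 1 \<and> j \<le> m \<and> (i < n \<longrightarrow> j \<le> lam!(n-i-1))"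
    using X i jv by simp
next
  assume h: "lam \<in> Xset n m \<and> 1 \<le> i \<and> i \<le> n \<and> j = lam!(n-i) + 1 \<and> j \<le> m \<and> (i < n \<longrightarrow> j \<le> lam!(n-i-1))"
  then have X: "lam \<in> Xset n m" and i: "1 \<le> i" "i \<le> n" and jv: "j = lam!(n-i) + 1" and jm: "j \<le> m"
    and jn: "i < n \<longrightarrow> j \<le> lam!(n-i-1)" by auto
  have ln: "length lam = n" using X by (simp add: Xset_def)
  have "lam[n-i := j] \<in> Xset n m" using updT_X h by blast
  moreover have "(i,j) \<notin> boxes n lam" using jv by (auto simp: boxes_def)
  moreover have "boxes n (lam[n-i := j]) = insert (i,j) (boxes n lam)"
    using boxes_upd[OF ln i, of j] jv i by (auto simp: boxes_def)
  ultimately show "lam \<in> Xc n m (True,i,j)" using X by auto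
qed



lemma updF_X:
  assumes h: "lam \<in> Xset n m \<and> 1 \<le> i \<and> i \<le> n \<and> j = lam!(n-i) \<and> 1 \<le> j \<and> (1 < i \<longrightarrow> lam!(n-i+1) < j)"
  shows "lam[n-i := j-1] \<in> Xset n m"
proof -
  from h have X: "lam \<in> Xset n m" and i: "1 \<le> i" "i \<le> n" and jv: "j = lam!(n-i)" and j1: "1 \<le> j"
    and jn: "1 < i \<longrightarrow> lam!(n-i+1) < j" by auto
  have ln: "length lam = n" using X by (simp add: Xset_def)
  show ?thesis
    unfolding Xset_char
  proof (intro conjI allI impI)
    show "length (lam[n-i := j-1]) = n" using ln by simp
  next
    fix k assume k: "Suc k < n"
    show "lam[n-i := j-1] ! Suc k \<le> lam[n-i := j-1] ! k"
    proof (cases "k = n-i")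
      case True
      then have "1 < i" using k by auto
      then show ?thesis using jn True k ln by (auto simp: nth_list_update)
    next
      case False
      show ?thesis
      proof (cases "Suc k = n-i")
        case True
        have "lam!(Suc k) \<le> lam!k" using X k unfolding Xset_char by blast
        then show ?thesis using jv True False ln k by (auto simp: nth_list_update)
      next
        case False2: False
        then show ?thesis using False X k ln unfolding Xset_char by (auto simp: nth_list_update)
      qed
    qed
  next
    fix k assume k: "k < n"
    show "lam[n-i := j-1] ! k \<le> m"
    proof (cases "k = n-i")
      case True
      then have "lam!k \<le> m" using X k unfolding Xset_char by blast
      then show ?thesis using True ln jv k by simp
    next
      case False then show ?thesis using X k ln unfolding Xset_char by simp
    qed
  qed
qed

lemma XcF_char: "lam \<in> Xc n m (False,i,j) \<longleftrightarrow> lam \<in> Xset n m \<and> 1 \<le> i \<and> i \<le> n \<and>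
   j = lam!(n-i) \<and> 1 \<le> j \<and> (1 < i \<longrightarrow> lam!(n-i+1) < j)"
proof
  assume h: "lam \<in> Xc n m (False,i,j)"
  then obtain \<mu> where X: "lam \<in> Xset n m" and ib: "(i,j) \<in> boxes n lam" and mu: "\<mu> \<in> Xset n m"
    and bm: "boxes n \<mu> = boxes n lam - {(i,j)}" by auto
  from ib have i: "1 \<le> i" "i \<le> n" and j1: "1 \<le> j" and jl: "j \<le> lam!(n-i)" by (auto simp: boxes_def)
  have ln: "length lam = n" "length \<mu> = n" using X mu by (auto simp: Xset_def)
  have "{j'. (i,j') \<in> boxes n \<mu>} = {j'. (i,j') \<in> boxes n lam} - {j}" using bm by auto
  then have row: "{1..\<mu>!(n-i)} = {1..lam!(n-i)} - {j}" using boxes_row[OF i] by simp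
  have "card {1..\<mu>!(n-i)} = card ({1..lam!(n-i)} - {j})" using row by simp
  then have c: "\<mu>!(n-i) = lam!(n-i) - 1" using j1 jl by simp
  have "j \<notin> {1..\<mu>!(n-i)}" using row by auto
  then have jv: "j = lam!(n-i)" using jl j1 c by auto
  have "boxes n \<mu> = boxes n (lam[n-i := j - 1])"
    unfolding bm using boxes_upd[OF ln(1) i, of "j-1"] jv i
    by (auto simp: boxes_def)
  then have mu_eq: "\<mu> = lam[n-i := j-1]" using boxes_eq[of \<mu> n "lam[n-i := j-1]"] ln by simp
  have "1 < i \<longrightarrow> lam!(n-i+1) < j"
  proof
    assume "1 < i"
    then have s: "Suc (n-i) < n" using i by auto
    have "\<mu>!(Suc (n-i)) \<le> \<mu>!(n-i)" using mu s unfolding Xset_char by blast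
    then have "lam!(n-i+1) \<le> j - 1" using ln i s unfolding mu_eq by simp
    then show "lam!(n-i+1) < j" using j1 by simp
  qed
  then show "lam \<in> Xset n m \<and> 1 \<le> i \<and> i \<le> n \<and> j = lam!(n-i) \<and> 1 \<le> j \<and> (1 < i \<longrightarrow> lam!(n-i+1) < j)"
    using X i jv j1 by simp
next
  assume h: "lam \<in> Xset n m \<and> 1 \<le> i \<and> i \<le> n \<and> j = lam!(n-i) \<and> 1 \<le> j \<and> (1 < i \<longrightarrow> lam!(n-i+1) < j)"
  then have X: "lam \<in> Xset n m" and i: "1 \<le> i" "i \<le> n" and jv: "j = lam!(n-i)" and j1: "1 \<le> j"
    and jn: "1 < i \<longrightarrow> lam!(n-i+1) < j" by auto
  have ln: "length lam = n" using X by (simp add: Xset_def)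
  have "lam[n-i := j-1] \<in> Xset n m" using updF_X h by blast
  moreover have "(i,j) \<in> boxes n lam" using jv i j1 by (auto simp: boxes_def)
  moreover have "boxes n (lam[n-i := j-1]) = boxes n lam - {(i,j)}"
    using boxes_upd[OF ln i, of "j-1"] jv i by (auto simp: boxes_def)
  ultimately show "lam \<in> Xc n m (False,i,j)" using X by auto
qed

lemma Xc_sub: "lam \<in> Xc n m \<beta> \<Longrightarrow> lam \<in> Xset n m"
  by (cases \<beta>) (case_tac a; auto)

lemma t_op_neg:
  assumes "lam \<in> Xc n m \<beta>"
  shows "t_op n \<beta> lam \<in> Xc n m (neg_root \<beta>) \<and> t_op n (neg_root \<beta>) (t_op n \<beta> lam) = lam"
proof -
  obtain s i j where b: "\<beta> = (s,i,j)" by (cases \<beta>) auto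
  show ?thesis
  proof (cases s)
    case True
    then have h: "lam \<in> Xset n m \<and> 1 \<le> i \<and> i \<le> n \<and> j = lam!(n-i) + 1 \<and> j \<le> m \<and> (i < n \<longrightarrow> j \<le> lam!(n-i-1))"
      using assms b XcT_char by auto
    then have ln: "length lam = n" by (simp add: Xset_def)
    have X': "lam[n-i := j] \<in> Xset n m" using h updT_X by blast
    have "lam[n-i := j] \<in> Xc n m (False,i,j)"
      unfolding XcF_char
    proof (intro conjI impI)
      show "j = lam[n - i := j] ! (n - i)" using ln h by simp
      show "1 \<le> j" using h by simp
      assume "1 < i"
      then have "Suc (n-i) < n" "n-i+1 \<noteq> n-i" using h by auto
      then show "lam[n - i := j] ! (n - i + 1) < j" using h ln unfolding Xset_char by auto
    qed (use X' h in auto)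
    moreover have "(lam[n-i := j])[n-i := j - 1] = lam" using h ln by simp
    moreover have "n - i < length lam" using ln h by auto
    ultimately show ?thesis using b True h by simp
  next
    case False
    then have h: "lam \<in> Xset n m \<and> 1 \<le> i \<and> i \<le> n \<and> j = lam!(n-i) \<and> 1 \<le> j \<and> (1 < i \<longrightarrow> lam!(n-i+1) < j)"
      using assms b XcF_char by auto
    then have ln: "length lam = n" by (simp add: Xset_def)
    have X': "lam[n-i := j-1] \<in> Xset n m" using h updF_X by blast
    have "lam[n-i := j-1] \<in> Xc n m (True,i,j)"
      unfolding XcT_char
    proof (intro conjI impI)
      show "j = lam[n - i := j-1] ! (n - i) + 1" using ln h by simp
      show "j \<le> m" using h ln unfolding Xset_char by auto
      assume "i < n"
      then have "Suc (n-i-1) < n" "n-i-1 \<noteq> n-i" "Suc (n-i-1) = n-i" using h by auto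
      then show "j \<le> lam[n - i := j-1] ! (n - i - 1)" using h ln unfolding Xset_char by (metis nth_list_update_neq)
    qed (use X' h in auto)
    moreover have "(lam[n-i := j-1])[n-i := j - 1 + 1] = lam" using h ln by simp
    moreover have "n - i < length lam" using ln h by auto
    ultimately show ?thesis using b False h by simp
  qed
qed



declare Xc.simps[simp del]

lemma lam_bar_nth: "length lam = n \<Longrightarrow> 0 < n \<Longrightarrow> k < n \<Longrightarrow>
   lam_bar lam ! k = (if k < n - 1 then lam!(Suc k) else 0)"
  unfolding lam_bar_def by (auto simp: nth_append nth_tl)

lemma lam_bar_len: "length lam = n \<Longrightarrow> 0 < n \<Longrightarrow> length (lam_bar lam) = n"
  unfolding lam_bar_def by simp

lemma lam_bar_X: assumes n: "0 < n" and X: "lam \<in> Xset n m" shows "lam_bar lam \<in> Xset n m"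
proof -
  have ln: "length lam = n" using X by (simp add: Xset_def)
  show ?thesis unfolding Xset_char
  proof (intro conjI allI impI)
    show "length (lam_bar lam) = n" using lam_bar_len[OF ln n] .
  next
    fix k assume k: "Suc k < n"
    show "lam_bar lam ! Suc k \<le> lam_bar lam ! k"
    proof (cases "Suc k < n - 1")
      case True
      then have "lam!(Suc (Suc k)) \<le> lam!(Suc k)" using X unfolding Xset_char by auto
      then show ?thesis using True k by (simp add: lam_bar_nth[OF ln n])
    next
      case False then show ?thesis using k by (simp add: lam_bar_nth[OF ln n])
    qed
  next
    fix k assume k: "k < n"
    show "lam_bar lam ! k \<le> m" using X k unfolding Xset_char by (auto simp: lam_bar_nth[OF ln n])
  qed
qed

lemma bar_inv:
  assumes n: "0 < n" and X: "lam \<in> Xset n m" and l0: "lam!0 = m" and i: "1 \<le> i" "i < n"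
  shows "lam \<in> Xc n m (s,i,j) \<longleftrightarrow> lam_bar lam \<in> Xc n m (s, Suc i, j)"
proof -
  have ln: "length lam = n" using X by (simp add: Xset_def)
  have XB: "lam_bar lam \<in> Xset n m" using lam_bar_X[OF n X] .
  have ii: "n - Suc i < n - 1" "Suc (n - Suc i) = n - i" "n - Suc i < n" using i by arith+
  have b1: "lam_bar lam ! (n - Suc i) = lam!(n-i)" using ii by (simp add: lam_bar_nth[OF ln n])
  have b2: "Suc i < n \<Longrightarrow> lam_bar lam ! (n - Suc i - 1) = lam!(n-i-1)"
  proof -
    assume "Suc i < n"
    then have "n - Suc i - 1 < n - 1" "Suc (n - Suc i - 1) = n - i - 1" by arith+
    then show ?thesis by (simp add: lam_bar_nth[OF ln n])
  qed
  have b3: "lam_bar lam ! (n - Suc i + 1) = (if 1 < i then lam!(n-i+1) else 0)"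
    using i by (auto simp: lam_bar_nth[OF ln n] Suc_diff_Suc)
  have l0': "Suc i = n \<Longrightarrow> lam!(n-i-1) = m" using l0 by simp
  show ?thesis
  proof (cases s)
    case True
    then show ?thesis using XcT_char[of lam n m i j] XcT_char[of "lam_bar lam" n m "Suc i" j] X XB i b1 b2 l0' by auto
  next
    case False
    then show ?thesis using XcF_char[of lam n m i j] XcF_char[of "lam_bar lam" n m "Suc i" j] X XB i b1 b3 by auto
  qed
qed

lemma bar_commute:
  assumes n: "0 < n" and X: "lam \<in> Xset n m" and l0: "lam!0 = m" and i: "1 \<le> i" "i < n"
  shows "t_op n (s,Suc i,j) (lam_bar lam) = lam_bar (t_op n (s,i,j) lam) \<and> t_op n (s,i,j) lam ! 0 = m"
proof -
  have ln: "length lam = n" using X by (simp add: Xset_def)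
  have ii: "n - Suc i < n - 1" "Suc (n - Suc i) = n - i" "n - Suc i < n" using i by arith+
  have b1: "lam_bar lam ! (n - Suc i) = lam!(n-i)" using ii by (simp add: lam_bar_nth[OF ln n])
  have key: "(lam_bar lam)[n - Suc i := v] = lam_bar (lam[n-i := v])" for v
  proof (rule nth_equalityI)
    show "length ((lam_bar lam)[n - Suc i := v]) = length (lam_bar (lam[n-i := v]))"
      using lam_bar_len[OF ln n] lam_bar_len[of "lam[n-i := v]" n] ln n by simp
  next
    fix k assume "k < length ((lam_bar lam)[n - Suc i := v])"
    then have k: "k < n" using lam_bar_len[OF ln n] by simp
    have l2: "length (lam[n-i := v]) = n" using ln by simp
    show "(lam_bar lam)[n - Suc i := v] ! k = lam_bar (lam[n-i := v]) ! k"
      using k i ln by (auto simp: lam_bar_nth[OF ln n] lam_bar_nth[OF l2 n] nth_list_update lam_bar_len[OF ln n])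
  qed
  have "t_op n (s,i,j) lam ! 0 = m" using l0 i ln by (cases s) (auto simp: nth_list_update)
  moreover have "t_op n (s,Suc i,j) (lam_bar lam) = lam_bar (t_op n (s,i,j) lam)"
    using key b1 by (cases s) auto
  ultimately show ?thesis by simp
qed

lemma wrapT: "lam \<in> Xset n m \<Longrightarrow> lam!0 = m \<Longrightarrow> lam \<notin> Xc n m (True,n,j)"
  unfolding XcT_char by auto

lemma wrapF: "0 < n \<Longrightarrow> lam \<in> Xset n m \<Longrightarrow> lam_bar lam \<notin> Xc n m (False,1,j)"
  unfolding XcF_char using lam_bar_nth[of lam n "n-1"] by (auto simp: Xset_def)

definition Tm :: "nat \<Rightarrow> nat list \<Rightarrow> nat" where "Tm m lam = length (takeWhile (\<lambda>x. x = m) lam)"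

lemma Tm_le: "Tm m lam \<le> length lam" by (simp add: Tm_def length_takeWhile_le)

lemma Tm_pos: "lam \<noteq> [] \<Longrightarrow> 0 < Tm m lam \<longleftrightarrow> lam!0 = m"
  by (cases lam) (auto simp: Tm_def)

lemma Tm_bar: assumes "lam \<noteq> []" "0 < m" "lam!0 = m" shows "Tm m (lam_bar lam) = Tm m lam - 1"
proof -
  obtain x t where l: "lam = x # t" using assms by (cases lam) auto
  have "takeWhile (\<lambda>x. x = m) (t @ [0]) = takeWhile (\<lambda>x. x = m) t"
  proof (cases "\<forall>y\<in>set t. y = m")
    case True
    then have e1: "takeWhile (\<lambda>x. x = m) t = t" by (simp add: takeWhile_eq_all_conv)
    have h3: "takeWhile (\<lambda>x. x = m) (t @ [0]) = t @ takeWhile (\<lambda>x. x = m) [0]"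
      by (rule takeWhile_append2) (use True in auto)
    have e2: "takeWhile (\<lambda>x. x = m) [0::nat] = []" using assms(2) by simp
    show ?thesis by (metis append_Nil2 e1 e2 h3)
  next
    case False then show ?thesis by auto
  qed
  then show ?thesis using assms l by (simp add: Tm_def lam_bar_def)
qed

definition fw :: "nat \<Rightarrow> nat list \<times> int \<Rightarrow> nat list \<times> int" where
  "fw m x = (if fst x ! 0 = m then (lam_bar (fst x), snd x + 1) else x)"

abbreviation AX :: "nat \<Rightarrow> nat \<Rightarrow> (nat list \<times> int) set" where
  "AX n m \<equiv> Xset n m \<times> (UNIV :: int set)"

definition R0X :: "nat \<Rightarrow> nat \<Rightarrow> ((nat list \<times> int) \<times> (nat list \<times> int)) set" where
  "R0X n m = {((lam,k),(lam_bar lam, k + 1)) | lam k. lam \<in> Xset n m \<and> lam ! 0 = m}"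

lemma XZ_rel_R0X: "XZ_rel n m = eqcl (AX n m) (R0X n m)"
  unfolding XZ_rel_def R0X_def ..

lemma fw_A: "0 < n \<Longrightarrow> x \<in> AX n m \<Longrightarrow> fw m x \<in> AX n m"
  unfolding fw_def using lam_bar_X by auto

lemma X_ne: "0 < n \<Longrightarrow> lam \<in> Xset n m \<Longrightarrow> lam \<noteq> []"
  by (auto simp: Xset_def)

lemma T_fw: assumes "0 < n" "0 < m" "x \<in> AX n m" shows "Tm m (fst (fw m x)) = Tm m (fst x) - 1"
proof (cases "fst x ! 0 = m")
  case True then show ?thesis using assms Tm_bar[of "fst x" m] X_ne[of n "fst x" m] by (auto simp: fw_def)
next
  case False
  then have "Tm m (fst x) = 0" using Tm_pos[of "fst x" m] X_ne[of n "fst x" m] assms by auto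
  then show ?thesis using False by (simp add: fw_def)
qed

lemma fw_pow: assumes "0 < n" "0 < m" "x \<in> AX n m"
  shows "(fw m ^^ a) x \<in> AX n m \<and> Tm m (fst ((fw m ^^ a) x)) = Tm m (fst x) - a"
proof (induction a)
  case 0 then show ?case using assms by simp
next
  case (Suc a)
  then show ?case using fw_A[OF assms(1)] T_fw[OF assms(1,2)] by simp
qed

definition Nf :: "nat \<Rightarrow> nat \<Rightarrow> nat list \<times> int \<Rightarrow> nat list \<times> int" where
  "Nf n m x = (fw m ^^ n) x"

lemma fw_fix: "0 < n \<Longrightarrow> x \<in> AX n m \<Longrightarrow> Tm m (fst x) = 0 \<Longrightarrow> fw m x = x"
  using Tm_pos[of "fst x" m] X_ne[of n "fst x" m] by (auto simp: fw_def)

lemma Tm_AX: "x \<in> AX n m \<Longrightarrow> Tm m (fst x) \<le> n"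
  using Tm_le[of m "fst x"] by (auto simp: Xset_def)

lemma fw_pow_stable: assumes "0 < n" "0 < m" "x \<in> AX n m" "Tm m (fst x) \<le> a"
  shows "(fw m ^^ a) x = (fw m ^^ Tm m (fst x)) x"
proof -
  let ?t = "Tm m (fst x)"
  let ?y = "(fw m ^^ ?t) x"
  have y: "?y \<in> AX n m" "Tm m (fst ?y) = 0" using fw_pow[OF assms(1-3), of ?t] by auto
  have fx: "fw m ?y = ?y" using fw_fix[OF assms(1) y] .
  have "(fw m ^^ d) ?y = ?y" for d by (induction d) (auto simp: fx)
  moreover have "(fw m ^^ a) x = (fw m ^^ (a - ?t)) ?y"
    using assms(4) by (metis funpow_add le_add_diff_inverse2 comp_apply)
  ultimately show ?thesis by simp
qed

lemma Nf_T: "0 < n \<Longrightarrow> 0 < m \<Longrightarrow> x \<in> AX n m \<Longrightarrow> Nf n m x = (fw m ^^ Tm m (fst x)) x"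
  unfolding Nf_def using fw_pow_stable Tm_AX by blast

lemma fw_Nf: assumes "0 < n" "0 < m" "x \<in> AX n m" shows "fw m (Nf n m x) = Nf n m x"
proof -
  have "Tm m (fst (Nf n m x)) = 0" using fw_pow[OF assms, of n] Tm_AX[OF assms(3)] by (simp add: Nf_def)
  then show ?thesis using fw_fix[OF assms(1)] fw_pow[OF assms, of n] by (simp add: Nf_def)
qed

lemma Nf_fw: assumes "0 < n" "0 < m" "x \<in> AX n m" shows "Nf n m (fw m x) = Nf n m x"
  using fw_Nf[OF assms] unfolding Nf_def by (simp add: funpow_swap1)

lemma Nf_A: "0 < n \<Longrightarrow> 0 < m \<Longrightarrow> x \<in> AX n m \<Longrightarrow> Nf n m x \<in> AX n m"
  unfolding Nf_def using fw_pow by blast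

lemma eqcl_kernel:
  assumes R: "R \<subseteq> A \<times> A" and NA: "\<And>x. x \<in> A \<Longrightarrow> (x, N x) \<in> (R \<union> R\<inverse>)\<^sup>*"
    and NR: "\<And>x y. (x,y) \<in> R \<Longrightarrow> N x = N y"
  shows "eqcl A R = {(x,y). x \<in> A \<and> y \<in> A \<and> N x = N y}"
proof
  show "eqcl A R \<subseteq> {(x,y). x \<in> A \<and> y \<in> A \<and> N x = N y}"
  proof
    fix p assume "p \<in> eqcl A R"
    then consider "p \<in> Id_on A" | "p \<in> (R \<union> R\<inverse>)\<^sup>+" unfolding eqcl_def by blast
    then show "p \<in> {(x,y). x \<in> A \<and> y \<in> A \<and> N x = N y}"
    proof cases
      case 1 then show ?thesis by auto
    next
      case 2
      obtain a b where p: "p = (a,b)" by (cases p)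
      have "(a,b) \<in> (R \<union> R\<inverse>)\<^sup>+" using 2 p by simp
      then have "a \<in> A \<and> b \<in> A \<and> N a = N b"
      proof (induction rule: trancl_induct)
        case (base y) then show ?case using R NR by auto
      next
        case (step y z) then show ?case using R NR by auto
      qed
      then show ?thesis using p by simp
    qed
  qed
next
  show "{(x,y). x \<in> A \<and> y \<in> A \<and> N x = N y} \<subseteq> eqcl A R"
  proof clarify
    fix x y assume xy: "x \<in> A" "y \<in> A" "N x = N y"
    let ?S = "R \<union> R\<inverse>"
    have sym: "?S\<inverse> = ?S" by auto
    have "(y, N y) \<in> ?S\<^sup>*" using NA xy by blast
    then have "(N y, y) \<in> (?S\<inverse>)\<^sup>*" by (simp add: rtrancl_converse)
    then have "(N y, y) \<in> ?S\<^sup>*" using sym by simp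
    then have "(x, y) \<in> ?S\<^sup>*" using NA[OF xy(1)] xy(3) by (metis rtrancl_trans)
    then show "(x,y) \<in> eqcl A R" unfolding eqcl_def using xy
      by (metis Id_onI UnI1 UnI2 rtrancl_eq_or_trancl)
  qed
qed

lemma XZ_rel_char: assumes n: "0 < n" and m: "0 < m"
  shows "XZ_rel n m = {(x,y). x \<in> AX n m \<and> y \<in> AX n m \<and> Nf n m x = Nf n m y}"
  unfolding XZ_rel_R0X
proof (rule eqcl_kernel)
  show "R0X n m \<subseteq> AX n m \<times> AX n m" unfolding R0X_def using lam_bar_X[OF n] by auto
next
  fix x assume x: "x \<in> AX n m"
  have "(x, (fw m ^^ a) x) \<in> (R0X n m \<union> (R0X n m)\<inverse>)\<^sup>*" for a
  proof (induction a)
    case 0 then show ?case by simp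
  next
    case (Suc a)
    let ?y = "(fw m ^^ a) x"
    have y: "?y \<in> AX n m" using fw_pow[OF n m x] by blast
    obtain lam k where yk: "?y = (lam,k)" by (cases ?y) auto
    have "(?y, fw m ?y) \<in> (R0X n m \<union> (R0X n m)\<inverse>)\<^sup>*"
    proof (cases "lam!0 = m")
      case True
      then have "(?y, fw m ?y) \<in> R0X n m" using y yk unfolding fw_def R0X_def by auto
      then show ?thesis by blast
    next
      case False
      then have "fw m ?y = ?y" using yk by (simp add: fw_def)
      then show ?thesis by simp
    qed
    from rtrancl_trans[OF Suc.IH this] show ?case by simp
  qed
  then show "(x, Nf n m x) \<in> (R0X n m \<union> (R0X n m)\<inverse>)\<^sup>*" unfolding Nf_def by blast
next
  fix x y assume "(x,y) \<in> R0X n m"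
  then obtain lam k where xy: "x = (lam,k)" "y = (lam_bar lam, k+1)" "lam \<in> Xset n m" "lam!0 = m"
    unfolding R0X_def by blast
  have "fw m x = y" using xy by (simp add: fw_def)
  then show "Nf n m x = Nf n m y" using Nf_fw[OF n m, of x] xy by simp
qed

lemma clsX_char: "0 < n \<Longrightarrow> 0 < m \<Longrightarrow> x \<in> AX n m \<Longrightarrow> clsX n m x = {y \<in> AX n m. Nf n m y = Nf n m x}"
  unfolding clsX_def using XZ_rel_char by auto

lemma bar_inj: "lam \<noteq> [] \<Longrightarrow> mu \<noteq> [] \<Longrightarrow> lam!0 = mu!0 \<Longrightarrow> lam_bar lam = lam_bar mu \<Longrightarrow> lam = mu"
  by (cases lam; cases mu) (auto simp: lam_bar_def)

lemma fw_cancel: assumes n: "0 < n" and m: "0 < m"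
  shows "x \<in> AX n m \<Longrightarrow> y \<in> AX n m \<Longrightarrow> e \<le> Tm m (fst x) \<Longrightarrow> e \<le> Tm m (fst y) \<Longrightarrow>
    (fw m ^^ e) x = (fw m ^^ e) y \<Longrightarrow> x = y"
proof (induction e arbitrary: x y)
  case 0 then show ?case by simp
next
  case (Suc e)
  have xA: "fst x \<in> Xset n m" "fst y \<in> Xset n m" using Suc.prems(1,2) by auto
  have fA: "fw m x \<in> AX n m" "fw m y \<in> AX n m" using fw_A[OF n] Suc.prems(1,2) by auto
  have Te: "e \<le> Tm m (fst (fw m x))" "e \<le> Tm m (fst (fw m y))"
    using T_fw[OF n m Suc.prems(1)] T_fw[OF n m Suc.prems(2)] Suc.prems(3,4) by auto
  have "(fw m ^^ e) (fw m x) = (fw m ^^ e) (fw m y)"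
    using Suc.prems(5) by (simp only: funpow_Suc_right comp_apply)
  then have eq: "fw m x = fw m y" using Suc.IH[OF fA Te] by simp
  have x0: "fst x ! 0 = m" using Tm_pos[OF X_ne[OF n xA(1)], of m] Suc.prems(3) by simp
  have y0: "fst y ! 0 = m" using Tm_pos[OF X_ne[OF n xA(2)], of m] Suc.prems(4) by simp
  have "lam_bar (fst x) = lam_bar (fst y)" "snd x = snd y" using eq x0 y0 by (auto simp: fw_def)
  then have "fst x = fst y" using bar_inj[OF X_ne[OF n xA(1)] X_ne[OF n xA(2)]] x0 y0 by simp
  then show ?case using \<open>snd x = snd y\<close> by (simp add: prod_eq_iff)
qed

lemma chain: assumes n: "0 < n" and m: "0 < m" and xy: "x \<in> AX n m" "y \<in> AX n m"
  and N: "Nf n m x = Nf n m y" and T: "Tm m (fst y) \<le> Tm m (fst x)"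
  shows "y = (fw m ^^ (Tm m (fst x) - Tm m (fst y))) x"
proof -
  let ?d = "Tm m (fst x) - Tm m (fst y)"
  let ?x = "(fw m ^^ ?d) x"
  have x': "?x \<in> AX n m" "Tm m (fst ?x) = Tm m (fst y)" using fw_pow[OF n m xy(1), of ?d] T by auto
  have e: "Tm m (fst y) + ?d = Tm m (fst x)" using T by simp
  have e2: "(fw m ^^ (Tm m (fst y) + ?d)) x = (fw m ^^ Tm m (fst y)) ?x"
    by (simp add: funpow_add)
  have "(fw m ^^ Tm m (fst y)) ?x = (fw m ^^ Tm m (fst x)) x" using e2 unfolding e by simp
  also have "\<dots> = Nf n m x" using Nf_T[OF n m xy(1)] by simp
  also have "\<dots> = (fw m ^^ Tm m (fst y)) y" using N Nf_T[OF n m xy(2)] by simp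
  finally have "(fw m ^^ Tm m (fst y)) ?x = (fw m ^^ Tm m (fst y)) y" .
  then have "?x = y" using fw_cancel[OF n m x'(1) xy(2), of "Tm m (fst y)"] x'(2) by simp
  then show ?thesis by simp
qed



definition MemX :: "nat \<Rightarrow> nat \<Rightarrow> root \<Rightarrow> (nat list \<times> int) set" where
  "MemX n m \<alpha> = {x. fst x \<in> Xc n m (nu_pow n (snd x) \<alpha>)}"

definition opX :: "nat \<Rightarrow> root \<Rightarrow> nat list \<times> int \<Rightarrow> nat list \<times> int" where
  "opX n \<alpha> x = (t_op n (nu_pow n (snd x) \<alpha>) (fst x), snd x)"

lemma MemX_A: "x \<in> MemX n m \<alpha> \<Longrightarrow> x \<in> AX n m"
  unfolding MemX_def using Xc_sub by (cases x) auto

lemma opX_A: "x \<in> MemX n m \<alpha> \<Longrightarrow> opX n \<alpha> x \<in> AX n m"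
  unfolding MemX_def opX_def using t_op_neg Xc_sub by (cases x) fastforce

lemma nu_step: "r < n \<Longrightarrow> nu n (s,r,j) = (s, Suc r, j)" by simp
lemma nu_wrap: "nu n (s,n,j) = (s, 1, j)" by simp

lemma W_lemma:
  assumes n: "0 < n" and m: "0 < m" and a: "(False,i,jj) \<in> Delta_iso n m"
  shows "z \<in> AX n m \<Longrightarrow> nu_pow n (snd z) (False,i,jj) = (False, r, jj) \<Longrightarrow> 1 \<le> r \<Longrightarrow>
    fst z \<notin> Xc n m (False, r, jj) \<Longrightarrow> Tm m (fst z) + r \<le> n \<Longrightarrow>
    (fw m ^^ e) z \<notin> MemX n m (False,i,jj)"
proof (induction e arbitrary: z r)
  case 0 then show ?case by (simp add: MemX_def)
next
  case (Suc e)
  have eq: "(fw m ^^ Suc e) z = (fw m ^^ e) (fw m z)" by (simp only: funpow_Suc_right comp_apply)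
  show ?case
  proof (cases "fst z ! 0 = m")
    case False
    then have "fw m z = z" by (simp add: fw_def)
    then show ?thesis using eq Suc by simp
  next
    case True
    have zX: "fst z \<in> Xset n m" using Suc.prems(1) by auto
    have "0 < Tm m (fst z)" using Tm_pos[OF X_ne[OF n zX], of m] True by simp
    then have rn: "r < n" using Suc.prems(5) by simp
    have fz: "fw m z = (lam_bar (fst z), snd z + 1)" using True by (simp add: fw_def)
    have nu1: "nu_pow n (snd (fw m z)) (False,i,jj) = (False, Suc r, jj)"
      using nu_pow_succ[OF n a, of "snd z"] Suc.prems(2) rn fz by simp
    have nb: "fst (fw m z) \<notin> Xc n m (False, Suc r, jj)"
      using bar_inv[OF n zX True Suc.prems(3) rn, of False jj] Suc.prems(4) fz by simp
    have T1: "Tm m (fst (fw m z)) + Suc r \<le> n"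
      using T_fw[OF n m Suc.prems(1)] Suc.prems(5) \<open>0 < Tm m (fst z)\<close> by simp
    have "(fw m ^^ e) (fw m z) \<notin> MemX n m (False,i,jj)"
      using Suc.IH[OF fw_A[OF n Suc.prems(1)] nu1 _ nb T1] by simp
    then show ?thesis using eq by simp
  qed
qed

lemma WD:
  assumes n: "0 < n" and m: "0 < m" and a: "(s,i,jj) \<in> Delta_iso n m"
  shows "x \<in> MemX n m (s,i,jj) \<Longrightarrow> (fw m ^^ d) x \<in> MemX n m (s,i,jj) \<Longrightarrow>
    Nf n m (opX n (s,i,jj) x) = Nf n m (opX n (s,i,jj) ((fw m ^^ d) x))"
proof (induction d arbitrary: x)
  case 0 then show ?case by simp
next
  case (Suc d)
  let ?\<alpha> = "(s,i,jj)"
  have eq: "(fw m ^^ Suc d) x = (fw m ^^ d) (fw m x)" by (simp only: funpow_Suc_right comp_apply)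
  obtain lam k where xk: "x = (lam,k)" by (cases x)
  have ai: "1 \<le> i" "i \<le> n" using a by (auto simp: Delta_iso_iff)
  let ?r = "rowf n i k"
  have nuk: "nu_pow n k ?\<alpha> = (s, ?r, jj)" using nu_pow_formula[OF n ai] by simp
  have rb: "1 \<le> ?r" "?r \<le> n" using rowf_bounds[OF n] by auto
  have lX: "lam \<in> Xc n m (s, ?r, jj)" using Suc.prems(1) xk nuk by (simp add: MemX_def)
  have lXs: "lam \<in> Xset n m" using lX Xc_sub by blast
  show ?case
  proof (cases "lam ! 0 = m")
    case False
    then have "fw m x = x" using xk by (simp add: fw_def)
    then show ?thesis using eq Suc by simp
  next
    case True
    have fx: "fw m x = (lam_bar lam, k + 1)" using True xk by (simp add: fw_def)
    show ?thesis
    proof (cases "?r < n")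
      case rn: True
      have nu1: "nu_pow n (k+1) ?\<alpha> = (s, Suc ?r, jj)" using nu_pow_succ[OF n a, of k] nuk rn by simp
      have bX: "lam_bar lam \<in> Xc n m (s, Suc ?r, jj)" using bar_inv[OF n lXs True rb(1) rn] lX by simp
      have fxM: "fw m x \<in> MemX n m ?\<alpha>" using fx nu1 bX by (simp add: MemX_def)
      have IH: "Nf n m (opX n ?\<alpha> (fw m x)) = Nf n m (opX n ?\<alpha> ((fw m ^^ d) (fw m x)))"
        using Suc.IH[OF fxM] Suc.prems(2) eq by simp
      have bc: "t_op n (s, Suc ?r, jj) (lam_bar lam) = lam_bar (t_op n (s, ?r, jj) lam)"
        "t_op n (s, ?r, jj) lam ! 0 = m" using bar_commute[OF n lXs True rb(1) rn] by auto
      have "opX n ?\<alpha> (fw m x) = fw m (opX n ?\<alpha> x)"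
        using fx nu1 bc xk nuk by (simp add: opX_def fw_def)
      then have "Nf n m (opX n ?\<alpha> (fw m x)) = Nf n m (opX n ?\<alpha> x)"
        using Nf_fw[OF n m opX_A[OF Suc.prems(1)]] by simp
      then show ?thesis using IH eq by simp
    next
      case False
      then have rn: "?r = n" using rb by simp
      show ?thesis
      proof (cases s)
        case True
        then show ?thesis using wrapT[OF lXs \<open>lam!0 = m\<close>, of jj] lX rn by simp
      next
        case sF: False
        have aF: "(False,i,jj) \<in> Delta_iso n m" using a sF by simp
        have nu1: "nu_pow n (snd (fw m x)) (False,i,jj) = (False, 1, jj)"
          using nu_pow_succ[OF n aF, of k] nuk rn fx sF by simp
        have nb: "fst (fw m x) \<notin> Xc n m (False, 1, jj)" using wrapF[OF n lXs] fx by simp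
        have T0: "0 < Tm m lam" using Tm_pos[OF X_ne[OF n lXs], of m] True by simp
        have T1: "Tm m (fst (fw m x)) + 1 \<le> n"
          using T_fw[OF n m MemX_A[OF Suc.prems(1)]] T0 Tm_AX[OF MemX_A[OF Suc.prems(1)]] xk by simp
        have "(fw m ^^ d) (fw m x) \<notin> MemX n m (False,i,jj)"
          using W_lemma[OF n m aF fw_A[OF n MemX_A[OF Suc.prems(1)]] nu1 _ nb T1] by simp
        then show ?thesis using Suc.prems(2) eq sF by simp
      qed
    qed
  qed
qed

lemma WD2:
  assumes n: "0 < n" and m: "0 < m" and a: "\<alpha> \<in> Delta_iso n m"
    and x: "x \<in> MemX n m \<alpha>" and y: "y \<in> MemX n m \<alpha>" and N: "Nf n m x = Nf n m y"
  shows "Nf n m (opX n \<alpha> x) = Nf n m (opX n \<alpha> y)"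
proof -
  obtain s i jj where al: "\<alpha> = (s,i,jj)" by (cases \<alpha>) auto
  show ?thesis
  proof (cases "Tm m (fst y) \<le> Tm m (fst x)")
    case True
    then have "y = (fw m ^^ (Tm m (fst x) - Tm m (fst y))) x"
      using chain[OF n m MemX_A[OF x] MemX_A[OF y] N] by simp
    then show ?thesis using WD[OF n m a[unfolded al]] x y al by metis
  next
    case False
    then have "x = (fw m ^^ (Tm m (fst y) - Tm m (fst x))) y"
      using chain[OF n m MemX_A[OF y] MemX_A[OF x] N[symmetric]] by simp
    then show ?thesis using WD[OF n m a[unfolded al]] x y al by metis
  qed
qed

definition FmX :: "nat \<Rightarrow> nat \<Rightarrow> root \<Rightarrow> (nat list \<times> int) set \<Rightarrow> (nat list \<times> int) set" where
  "FmX n m \<alpha> c = clsX n m (opX n \<alpha> (SOME x. x \<in> c \<and> x \<in> MemX n m \<alpha>))"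

lemma FmX_val:
  assumes n: "0 < n" and m: "0 < m" and a: "\<alpha> \<in> Delta_iso n m"
    and l: "lam \<in> Xc n m (nu_pow n j \<alpha>)"
  shows "FmX n m \<alpha> (clsX n m (lam, j)) = clsX n m (t_op n (nu_pow n j \<alpha>) lam, j)"
proof -
  let ?x = "(lam, j)"
  have xM: "?x \<in> MemX n m \<alpha>" using l by (simp add: MemX_def)
  have xA: "?x \<in> AX n m" using MemX_A[OF xM] .
  have "?x \<in> clsX n m ?x \<and> ?x \<in> MemX n m \<alpha>" using clsX_char[OF n m xA] xA xM by simp
  then have "(SOME y. y \<in> clsX n m ?x \<and> y \<in> MemX n m \<alpha>) \<in> clsX n m ?x \<and>
     (SOME y. y \<in> clsX n m ?x \<and> y \<in> MemX n m \<alpha>) \<in> MemX n m \<alpha>" by (rule someI)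
  then obtain y where y: "y \<in> clsX n m ?x" "y \<in> MemX n m \<alpha>"
    and ys: "(SOME y. y \<in> clsX n m ?x \<and> y \<in> MemX n m \<alpha>) = y" by blast
  have "Nf n m y = Nf n m ?x" using y(1) clsX_char[OF n m xA] by simp
  then have "Nf n m (opX n \<alpha> y) = Nf n m (opX n \<alpha> ?x)" using WD2[OF n m a y(2) xM] by simp
  then have "clsX n m (opX n \<alpha> y) = clsX n m (opX n \<alpha> ?x)"
    using clsX_char[OF n m opX_A[OF y(2)]] clsX_char[OF n m opX_A[OF xM]] by simp
  then show ?thesis unfolding FmX_def ys by (simp add: opX_def)
qed

lemma neg_neg: "neg_root (neg_root \<alpha>) = \<alpha>" by (cases \<alpha>) auto

lemma neg_Delta: "\<alpha> \<in> Delta_iso n m \<Longrightarrow> neg_root \<alpha> \<in> Delta_iso n m"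
  by (cases \<alpha>) (auto simp: Delta_iso_def)

lemma Tiso_intro:
  assumes D: "\<forall>\<alpha>\<in>D. neg_root \<alpha> \<in> D" and V: "\<forall>\<alpha>\<in>D. Fo \<alpha> \<subseteq> V"
    and M: "\<forall>\<alpha>\<in>D. Fm \<alpha> ` Fo \<alpha> \<subseteq> Fo (neg_root \<alpha>)"
    and I: "\<forall>\<alpha>\<in>D. \<forall>c\<in>Fo \<alpha>. Fm (neg_root \<alpha>) (Fm \<alpha> c) = c"
  shows "Tiso_functor D V Fo Fm"
  unfolding Tiso_functor_def
proof (rule ballI, intro conjI)
  fix \<alpha> assume a: "\<alpha> \<in> D"
  show "Fo \<alpha> \<subseteq> V" using V a by blast
  show "\<forall>c\<in>Fo \<alpha>. Fm (neg_root \<alpha>) (Fm \<alpha> c) = c" using I a by blast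
  have a': "neg_root \<alpha> \<in> D" using D a by blast
  show "bij_betw (Fm \<alpha>) (Fo \<alpha>) (Fo (neg_root \<alpha>))"
  proof (rule bij_betw_byWitness[where f' = "Fm (neg_root \<alpha>)"])
    show "\<forall>c\<in>Fo \<alpha>. Fm (neg_root \<alpha>) (Fm \<alpha> c) = c" using I a by blast
    show "\<forall>c\<in>Fo (neg_root \<alpha>). Fm \<alpha> (Fm (neg_root \<alpha>) c) = c" using I a' neg_neg[of \<alpha>] by metis
    show "Fm \<alpha> ` Fo \<alpha> \<subseteq> Fo (neg_root \<alpha>)" using M a by blast
    show "Fm (neg_root \<alpha>) ` Fo (neg_root \<alpha>) \<subseteq> Fo \<alpha>" using M a' neg_neg[of \<alpha>] by metis
  qed
qed

lemma partA:
  assumes n: "0 < n" and m: "0 < m"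
  shows "Tiso_functor (Delta_iso n m) (XZ n m) (Fobj n m) (FmX n m)"
proof (rule Tiso_intro)
  show "\<forall>\<alpha>\<in>Delta_iso n m. neg_root \<alpha> \<in> Delta_iso n m" using neg_Delta by blast
  show "\<forall>\<alpha>\<in>Delta_iso n m. Fobj n m \<alpha> \<subseteq> XZ n m"
  proof (intro ballI subsetI)
    fix \<alpha> c assume "c \<in> Fobj n m \<alpha>"
    then obtain lam j where l: "lam \<in> Xc n m (nu_pow n j \<alpha>)" and c: "c = clsX n m (lam, j)"
      unfolding Fobj_def by blast
    have "(lam, j) \<in> AX n m" using Xc_sub[OF l] by simp
    then show "c \<in> XZ n m" unfolding c XZ_def clsX_def by (rule quotientI)
  qed
  show "\<forall>\<alpha>\<in>Delta_iso n m. FmX n m \<alpha> ` Fobj n m \<alpha> \<subseteq> Fobj n m (neg_root \<alpha>)"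
  proof (intro ballI subsetI)
    fix \<alpha> c assume a: "\<alpha> \<in> Delta_iso n m" and "c \<in> FmX n m \<alpha> ` Fobj n m \<alpha>"
    then obtain lam j where l: "lam \<in> Xc n m (nu_pow n j \<alpha>)" and c: "c = FmX n m \<alpha> (clsX n m (lam, j))"
      unfolding Fobj_def by blast
    obtain s i jj where al: "\<alpha> = (s,i,jj)" by (cases \<alpha>) auto
    have "t_op n (nu_pow n j \<alpha>) lam \<in> Xc n m (nu_pow n j (neg_root \<alpha>))"
      using t_op_neg[OF l] nu_pow_neg[OF n a[unfolded al]] al by simp
    then show "c \<in> Fobj n m (neg_root \<alpha>)" using FmX_val[OF n m a l] c unfolding Fobj_def by blast
  qed
  show "\<forall>\<alpha>\<in>Delta_iso n m. \<forall>c\<in>Fobj n m \<alpha>. FmX n m (neg_root \<alpha>) (FmX n m \<alpha> c) = c"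
  proof (intro ballI)
    fix \<alpha> c assume a: "\<alpha> \<in> Delta_iso n m" and "c \<in> Fobj n m \<alpha>"
    then obtain lam j where l: "lam \<in> Xc n m (nu_pow n j \<alpha>)" and c: "c = clsX n m (lam, j)"
      unfolding Fobj_def by blast
    obtain s i jj where al: "\<alpha> = (s,i,jj)" by (cases \<alpha>) auto
    have nn: "nu_pow n j (neg_root \<alpha>) = neg_root (nu_pow n j \<alpha>)" using nu_pow_neg[OF n a[unfolded al]] al by simp
    have l2: "t_op n (nu_pow n j \<alpha>) lam \<in> Xc n m (nu_pow n j (neg_root \<alpha>))"
      using t_op_neg[OF l] nn by simp
    show "FmX n m (neg_root \<alpha>) (FmX n m \<alpha> c) = c"
      using FmX_val[OF n m a l] FmX_val[OF n m neg_Delta[OF a] l2] t_op_neg[OF l] nn c by simp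
  qed
qed



section \<open>Shuffles\<close>

declare upt_Suc[simp del]

lemma length_takeWhile_neq: "x \<in> set xs \<Longrightarrow> length (takeWhile (\<lambda>y. y \<noteq> x) xs) < length xs"
  by (induction xs) auto

lemma distinct_filters: "distinct (filter isl xs) \<Longrightarrow> distinct (filter (\<lambda>x. \<not> isl x) xs) \<Longrightarrow> distinct xs"
  by (induction xs) (auto split: if_splits)

lemma set_filters: "set xs = set (filter isl xs) \<union> set (filter (\<lambda>x. \<not> isl x) xs)"
  by auto

lemma S_char: "\<sigma> \<in> shuffle_set n m \<longleftrightarrow>
   filter isl \<sigma> = map Inl [1..<n+1] \<and> filter (\<lambda>x. \<not> isl x) \<sigma> = map Inr [1..<m+1]"
proof
  assume "\<sigma> \<in> shuffle_set n m" then show "filter isl \<sigma> = map Inl [1..<n+1] \<and> filter (\<lambda>x. \<not> isl x) \<sigma> = map Inr [1..<m+1]"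
    by (simp add: shuffle_set_def)
next
  assume h: "filter isl \<sigma> = map Inl [1..<n+1] \<and> filter (\<lambda>x. \<not> isl x) \<sigma> = map Inr [1..<m+1]"
  have d1: "distinct (filter isl \<sigma>)" using h by (simp add: distinct_map)
  have d2: "distinct (filter (\<lambda>x. \<not> isl x) \<sigma>)" using h by (simp add: distinct_map)
  have d: "distinct \<sigma>" using distinct_filters[OF d1 d2] .
  have e1: "{1..<n+1} = {1..n}" "{1..<m+1} = {1..m}" by auto
  have "set \<sigma> = Inl ` {1..<n+1} \<union> Inr ` {1..<m+1}" using h set_filters[of \<sigma>]
    by (metis list.set_map set_upt)
  then have "set \<sigma> = Iset n m" unfolding Iset_def e1 .
  then show "\<sigma> \<in> shuffle_set n m" using d h by (simp add: shuffle_set_def)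
qed

lemma S_distinct: "\<sigma> \<in> shuffle_set n m \<Longrightarrow> distinct \<sigma>" by (simp add: shuffle_set_def)

lemma S_len: "\<sigma> \<in> shuffle_set n m \<Longrightarrow> length \<sigma> = n + m"
  using sum_length_filter_compl[of isl \<sigma>] by (simp add: S_char)

definition idxl :: "'a list \<Rightarrow> 'a \<Rightarrow> nat" where
  "idxl xs x = length (takeWhile (\<lambda>y. y \<noteq> x) xs)"

lemma takeWhile_idx: "takeWhile (\<lambda>y. y \<noteq> x) xs = take (idxl xs x) xs"
  unfolding idxl_def by (rule takeWhile_eq_take)

lemma idxl_lt: "x \<in> set xs \<Longrightarrow> idxl xs x < length xs \<and> xs ! idxl xs x = x"
proof -
  assume x: "x \<in> set xs"
  have l: "idxl xs x < length xs" unfolding idxl_def using x by (rule length_takeWhile_neq)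
  have "\<not> (xs ! idxl xs x \<noteq> x)" using nth_length_takeWhile[of "\<lambda>y. y \<noteq> x" xs] l unfolding idxl_def by blast
  then show ?thesis using l by simp
qed

lemma idxl_nth: assumes "distinct xs" "k < length xs" shows "idxl xs (xs ! k) = k"
proof -
  have "takeWhile (\<lambda>y. y \<noteq> xs ! k) xs = take k xs"
    by (rule takeWhile_eq_take_P_nth) (use assms in \<open>auto simp: nth_eq_iff_index_eq\<close>)
  then show ?thesis unfolding idxl_def using assms by simp
qed

definition Ac :: "idx list \<Rightarrow> nat \<Rightarrow> nat" where "Ac \<sigma> p = length (filter isl (take p \<sigma>))"
definition BcN :: "idx list \<Rightarrow> nat \<Rightarrow> nat" where "BcN \<sigma> p = length (filter (\<lambda>x. \<not> isl x) (take p \<sigma>))"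

definition cc :: "idx list \<Rightarrow> nat \<Rightarrow> nat" where
  "cc \<sigma> i = length (filter (\<lambda>x. \<not> isl x) (takeWhile (\<lambda>x. x \<noteq> Inl i) \<sigma>))"

lemma cc_eq: "cc \<sigma> i = BcN \<sigma> (idxl \<sigma> (Inl i))"
  unfolding cc_def BcN_def using takeWhile_idx[of "Inl i" \<sigma>] by simp

lemma AB_sum: "p \<le> length \<sigma> \<Longrightarrow> Ac \<sigma> p + BcN \<sigma> p = p"
  unfolding Ac_def BcN_def using sum_length_filter_compl[of isl "take p \<sigma>"] by simp

lemma take_split: "p \<le> q \<Longrightarrow> take q xs = take p xs @ take (q - p) (drop p xs)"
  by (metis le_add_diff_inverse take_add)

lemma Ac_mono: "p \<le> q \<Longrightarrow> Ac \<sigma> p \<le> Ac \<sigma> q"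
  unfolding Ac_def using take_split[of p q \<sigma>] by (metis filter_append le_add1 length_append)

lemma BcN_mono: "p \<le> q \<Longrightarrow> BcN \<sigma> p \<le> BcN \<sigma> q"
  unfolding BcN_def using take_split[of p q \<sigma>] by (metis filter_append le_add1 length_append)

lemma Ac_Suc: "p < length \<sigma> \<Longrightarrow> Ac \<sigma> (Suc p) = Ac \<sigma> p + (if isl (\<sigma>!p) then 1 else 0)"
  unfolding Ac_def by (simp add: take_Suc_conv_app_nth)

lemma BcN_Suc: "p < length \<sigma> \<Longrightarrow> BcN \<sigma> (Suc p) = BcN \<sigma> p + (if isl (\<sigma>!p) then 0 else 1)"
  unfolding BcN_def by (simp add: take_Suc_conv_app_nth)

lemma BcN_0: "BcN \<sigma> 0 = 0" by (simp add: BcN_def)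

lemma Ac_len: "\<sigma> \<in> shuffle_set n m \<Longrightarrow> Ac \<sigma> (length \<sigma>) = n"
  unfolding Ac_def by (simp add: S_char)

lemma BcN_len: "\<sigma> \<in> shuffle_set n m \<Longrightarrow> BcN \<sigma> (length \<sigma>) = m"
  unfolding BcN_def by (simp add: S_char)

lemma prefix_nth: "xs @ ys = zs \<Longrightarrow> k < length xs \<Longrightarrow> zs ! k = xs ! k"
  by (auto simp: nth_append)

lemma L_nth:
  assumes S: "\<sigma> \<in> shuffle_set n m" and p: "p < length \<sigma>"
  shows "(isl (\<sigma>!p) \<longrightarrow> \<sigma>!p = Inl (Ac \<sigma> p + 1) \<and> Ac \<sigma> p < n) \<and>
         (\<not> isl (\<sigma>!p) \<longrightarrow> \<sigma>!p = Inr (BcN \<sigma> p + 1) \<and> BcN \<sigma> p < m)"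
proof (intro conjI impI)
  have tk: "take (Suc p) \<sigma> = take p \<sigma> @ [\<sigma>!p]" using p by (simp add: take_Suc_conv_app_nth)
  have sp: "take (Suc p) \<sigma> @ drop (Suc p) \<sigma> = \<sigma>" by simp
  {
    assume i: "isl (\<sigma>!p)"
    have e: "filter isl (take p \<sigma>) @ [\<sigma>!p] @ filter isl (drop (Suc p) \<sigma>) = map Inl [1..<n+1]"
      using arg_cong[OF sp, of "filter isl"] tk i S by (simp add: S_char)
    have l: "Ac \<sigma> p < n"
      using arg_cong[OF e, of length] by (simp add: Ac_def)
    have "map Inl [1..<n+1] ! Ac \<sigma> p = \<sigma>!p"
      using prefix_nth[of "filter isl (take p \<sigma>) @ [\<sigma>!p]" "filter isl (drop (Suc p) \<sigma>)" "map Inl [1..<n+1]" "Ac \<sigma> p"] e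
      by (simp add: Ac_def nth_append)
    then show "\<sigma>!p = Inl (Ac \<sigma> p + 1)" using l by simp
    show "Ac \<sigma> p < n" using l .
  }
  {
    assume i: "\<not> isl (\<sigma>!p)"
    have e: "filter (\<lambda>x. \<not> isl x) (take p \<sigma>) @ [\<sigma>!p] @ filter (\<lambda>x. \<not> isl x) (drop (Suc p) \<sigma>) = map Inr [1..<m+1]"
      using arg_cong[OF sp, of "filter (\<lambda>x. \<not> isl x)"] tk i S by (simp add: S_char)
    have l: "BcN \<sigma> p < m"
      using arg_cong[OF e, of length] by (simp add: BcN_def)
    have "map Inr [1..<m+1] ! BcN \<sigma> p = \<sigma>!p"
      using prefix_nth[of "filter (\<lambda>x. \<not> isl x) (take p \<sigma>) @ [\<sigma>!p]" "filter (\<lambda>x. \<not> isl x) (drop (Suc p) \<sigma>)" "map Inr [1..<m+1]" "BcN \<sigma> p"] e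
      by (simp add: BcN_def nth_append)
    then show "\<sigma>!p = Inr (BcN \<sigma> p + 1)" using l by simp
    show "BcN \<sigma> p < m" using l .
  }
qed

lemma Inl_in: "\<sigma> \<in> shuffle_set n m \<Longrightarrow> 1 \<le> i \<Longrightarrow> i \<le> n \<Longrightarrow> Inl i \<in> set \<sigma>"
  unfolding shuffle_set_def Iset_def by auto

lemma Inr_in: "\<sigma> \<in> shuffle_set n m \<Longrightarrow> 1 \<le> j \<Longrightarrow> j \<le> m \<Longrightarrow> Inr j \<in> set \<sigma>"
  unfolding shuffle_set_def Iset_def by auto

lemma qfacts:
  assumes S: "\<sigma> \<in> shuffle_set n m" and i: "1 \<le> i" "i \<le> n"
  shows "idxl \<sigma> (Inl i) < length \<sigma> \<and> \<sigma> ! idxl \<sigma> (Inl i) = Inl i \<and> Ac \<sigma> (idxl \<sigma> (Inl i)) = i - 1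
     \<and> idxl \<sigma> (Inl i) = cc \<sigma> i + (i - 1)"
proof -
  let ?q = "idxl \<sigma> (Inl i)"
  have q: "?q < length \<sigma>" "\<sigma> ! ?q = Inl i" using idxl_lt[OF Inl_in[OF S i]] by auto
  have "Inl i = Inl (Ac \<sigma> ?q + 1)" using L_nth[OF S q(1)] q(2) by simp
  then have a: "Ac \<sigma> ?q = i - 1" by simp
  have "?q = cc \<sigma> i + (i - 1)" using AB_sum[of ?q \<sigma>] q(1) a cc_eq[of \<sigma> i] by simp
  then show ?thesis using q a by simp
qed

lemma q_lt: "\<sigma> \<in> shuffle_set n m \<Longrightarrow> 1 \<le> i \<Longrightarrow> i \<le> n \<Longrightarrow> idxl \<sigma> (Inl i) < length \<sigma>"
  using qfacts by blast
lemma q_nth: "\<sigma> \<in> shuffle_set n m \<Longrightarrow> 1 \<le> i \<Longrightarrow> i \<le> n \<Longrightarrow> \<sigma> ! idxl \<sigma> (Inl i) = Inl i"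
  using qfacts by blast
lemma q_Ac: "\<sigma> \<in> shuffle_set n m \<Longrightarrow> 1 \<le> i \<Longrightarrow> i \<le> n \<Longrightarrow> Ac \<sigma> (idxl \<sigma> (Inl i)) = i - 1"
  using qfacts by blast
lemma q_cc: "\<sigma> \<in> shuffle_set n m \<Longrightarrow> 1 \<le> i \<Longrightarrow> i \<le> n \<Longrightarrow> idxl \<sigma> (Inl i) = cc \<sigma> i + (i - 1)"
  using qfacts by blast

lemma q_mono:
  assumes S: "\<sigma> \<in> shuffle_set n m" and i: "1 \<le> i" "i < i'" "i' \<le> n"
  shows "idxl \<sigma> (Inl i) < idxl \<sigma> (Inl i')"
proof (rule ccontr)
  assume "\<not> ?thesis"
  then have "Ac \<sigma> (idxl \<sigma> (Inl i')) \<le> Ac \<sigma> (idxl \<sigma> (Inl i))" using Ac_mono by simp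
  moreover have "Ac \<sigma> (idxl \<sigma> (Inl i)) = i - 1" using q_Ac[OF S, of i] i by simp
  moreover have "Ac \<sigma> (idxl \<sigma> (Inl i')) = i' - 1" using q_Ac[OF S, of i'] i by simp
  ultimately show False using i by linarith
qed

lemma cc_mono: "\<sigma> \<in> shuffle_set n m \<Longrightarrow> 1 \<le> i \<Longrightarrow> i < i' \<Longrightarrow> i' \<le> n \<Longrightarrow> cc \<sigma> i \<le> cc \<sigma> i'"
  unfolding cc_eq by (rule BcN_mono, rule less_imp_le, rule q_mono)

lemma cc_le: "\<sigma> \<in> shuffle_set n m \<Longrightarrow> cc \<sigma> i \<le> m"
proof -
  assume S: "\<sigma> \<in> shuffle_set n m"
  have "idxl \<sigma> (Inl i) \<le> length \<sigma>" unfolding idxl_def by (rule length_takeWhile_le)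
  then have "BcN \<sigma> (idxl \<sigma> (Inl i)) \<le> BcN \<sigma> (length \<sigma>)" by (rule BcN_mono)
  then show ?thesis using BcN_len[OF S] cc_eq by simp
qed

lemma zeta_len: "length (zeta n \<sigma>) = n" by (simp add: zeta_def)

lemma zeta_nth: "k < n \<Longrightarrow> zeta n \<sigma> ! k = cc \<sigma> (n - k)"
  by (simp add: zeta_def cc_def)

lemma zeta_row: "1 \<le> i \<Longrightarrow> i \<le> n \<Longrightarrow> zeta n \<sigma> ! (n - i) = cc \<sigma> i"
  using zeta_nth[of "n-i" n \<sigma>] by simp

lemma zeta_X: assumes S: "\<sigma> \<in> shuffle_set n m" shows "zeta n \<sigma> \<in> Xset n m"
  unfolding Xset_char
proof (intro conjI allI impI)
  show "length (zeta n \<sigma>) = n" by (rule zeta_len)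
  fix k assume k: "Suc k < n"
  show "zeta n \<sigma> ! Suc k \<le> zeta n \<sigma> ! k"
    using k cc_mono[OF S, of "n - Suc k" "n - k"] by (simp add: zeta_nth)
next
  fix k assume "k < n" then show "zeta n \<sigma> ! k \<le> m" using cc_le[OF S] by (simp add: zeta_nth)
qed



lemma pattern_eq: "filter isl s = filter isl t \<Longrightarrow> filter (\<lambda>x. \<not> isl x) s = filter (\<lambda>x. \<not> isl x) t
   \<Longrightarrow> map isl s = map isl t \<Longrightarrow> s = t"
proof (induction s arbitrary: t)
  case Nil then show ?case by simp
next
  case (Cons a s)
  then obtain b t' where t: "t = b # t'" by (cases t) auto
  have ab: "isl a = isl b" "map isl s = map isl t'" using Cons.prems(3) t by auto
  show ?case
  proof (cases "isl a")
    case True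
    then have "a = b" "filter isl s = filter isl t'" using Cons.prems(1) t ab by auto
    moreover have "filter (\<lambda>x. \<not> isl x) s = filter (\<lambda>x. \<not> isl x) t'" using Cons.prems(2) t ab True by auto
    ultimately show ?thesis using Cons.IH ab t by simp
  next
    case False
    then have "a = b" "filter (\<lambda>x. \<not> isl x) s = filter (\<lambda>x. \<not> isl x) t'" using Cons.prems(2) t ab by auto
    moreover have "filter isl s = filter isl t'" using Cons.prems(1) t ab False by auto
    ultimately show ?thesis using Cons.IH ab t by simp
  qed
qed

lemma isl_iff_q:
  assumes S: "\<sigma> \<in> shuffle_set n m" and p: "p < length \<sigma>"
  shows "isl (\<sigma>!p) \<longleftrightarrow> (\<exists>i. 1 \<le> i \<and> i \<le> n \<and> idxl \<sigma> (Inl i) = p)"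
proof
  assume i: "isl (\<sigma>!p)"
  then have e: "\<sigma>!p = Inl (Ac \<sigma> p + 1)" "Ac \<sigma> p < n" using L_nth[OF S p] by auto
  have "idxl \<sigma> (Inl (Ac \<sigma> p + 1)) = p" using idxl_nth[OF S_distinct[OF S] p] e by simp
  then show "\<exists>i. 1 \<le> i \<and> i \<le> n \<and> idxl \<sigma> (Inl i) = p" using e(2) by (intro exI[of _ "Ac \<sigma> p + 1"]) auto
next
  assume "\<exists>i. 1 \<le> i \<and> i \<le> n \<and> idxl \<sigma> (Inl i) = p"
  then obtain i where "1 \<le> i" "i \<le> n" "idxl \<sigma> (Inl i) = p" by blast
  then show "isl (\<sigma>!p)" using q_nth[OF S] by force
qed

lemma zeta_inj:
  assumes S: "\<sigma> \<in> shuffle_set n m" and T: "\<tau> \<in> shuffle_set n m" and z: "zeta n \<sigma> = zeta n \<tau>"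
  shows "\<sigma> = \<tau>"
proof (rule pattern_eq)
  show "filter isl \<sigma> = filter isl \<tau>" "filter (\<lambda>x. \<not> isl x) \<sigma> = filter (\<lambda>x. \<not> isl x) \<tau>"
    using S T by (auto simp: S_char)
  have q: "idxl \<sigma> (Inl i) = idxl \<tau> (Inl i)" if "1 \<le> i" "i \<le> n" for i
  proof -
    have "cc \<sigma> i = cc \<tau> i" using zeta_row[OF that, of \<sigma>] zeta_row[OF that, of \<tau>] z by simp
    then show ?thesis using q_cc[OF S that] q_cc[OF T that] by simp
  qed
  show "map isl \<sigma> = map isl \<tau>"
  proof (rule nth_equalityI)
    show "length (map isl \<sigma>) = length (map isl \<tau>)" using S_len[OF S] S_len[OF T] by simp
    fix p assume "p < length (map isl \<sigma>)"
    then have p: "p < length \<sigma>" "p < length \<tau>" using S_len[OF S] S_len[OF T] by auto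
    show "map isl \<sigma> ! p = map isl \<tau> ! p"
      using isl_iff_q[OF S p(1)] isl_iff_q[OF T p(2)] q p by auto
  qed
qed

lemma zeta_first:
  assumes S: "\<sigma> \<in> shuffle_set n m" and n: "0 < n"
  shows "zeta n \<sigma> ! 0 = m \<longleftrightarrow> last \<sigma> = Inl n"
proof -
  have z: "zeta n \<sigma> ! 0 = cc \<sigma> n" using zeta_nth[OF n] by simp
  have l: "length \<sigma> = n + m" using S_len[OF S] .
  have ne: "\<sigma> \<noteq> []" using l n by auto
  have last: "last \<sigma> = \<sigma> ! (n + m - 1)" using last_conv_nth[OF ne] l by simp
  have q: "idxl \<sigma> (Inl n) = cc \<sigma> n + (n - 1)" using q_cc[OF S, of n] n by simp
  show ?thesis
  proof
    assume "zeta n \<sigma> ! 0 = m"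
    then have "idxl \<sigma> (Inl n) = n + m - 1" using z q n by simp
    then show "last \<sigma> = Inl n" using last q_nth[OF S, of n] n by simp
  next
    assume "last \<sigma> = Inl n"
    then have "idxl \<sigma> (Inl n) = n + m - 1" using last idxl_nth[OF S_distinct[OF S], of "n+m-1"] l n by simp
    then show "zeta n \<sigma> ! 0 = m" using z q n by simp
  qed
qed

lemma isl_nu_inv: "isl (nu_inv_idx n x) = isl x" by (cases x) auto

lemma isl_comp_nu_inv: "isl \<circ> nu_inv_idx n = isl" by (rule ext) (simp add: isl_nu_inv)

lemma nisl_comp_nu_inv: "(\<lambda>x. \<not> isl x) \<circ> nu_inv_idx n = (\<lambda>x. \<not> isl x)" by (rule ext) (simp add: isl_nu_inv)

lemma nu_inv_nisl: "\<not> isl x \<Longrightarrow> nu_inv_idx n x = x" by (cases x) auto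

lemma filter_nisl_map_nu: "filter (\<lambda>x. \<not> isl x) (map (nu_inv_idx n) xs) = filter (\<lambda>x. \<not> isl x) xs"
  by (induction xs) (auto simp: isl_nu_inv nu_inv_nisl)

lemma filter_isl_map_nu: "filter isl (map (nu_inv_idx n) xs) = map (nu_inv_idx n) (filter isl xs)"
  by (simp add: filter_map isl_comp_nu_inv)

lemma upt_last: "1 \<le> n \<Longrightarrow> [1..<n+1] = [1..<n] @ [n]"
  by (simp add: upt_Suc)

lemma upt_first: "1 \<le> n \<Longrightarrow> [1..<n+1] = 1 # [2..<n+1]"
  by (simp add: upt_conv_Cons numeral_2_eq_2)

lemma sb_split:
  assumes S: "\<sigma> \<in> shuffle_set n m" and n: "0 < n" and l: "last \<sigma> = Inl n"
  shows "\<sigma> = butlast \<sigma> @ [Inl n]" "filter isl (butlast \<sigma>) = map Inl [1..<n]"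
    "filter (\<lambda>x. \<not> isl x) (butlast \<sigma>) = map Inr [1..<m+1]"
proof -
  have ne: "\<sigma> \<noteq> []" using S_len[OF S] n by auto
  show sp: "\<sigma> = butlast \<sigma> @ [Inl n]" using append_butlast_last_id[OF ne] l by simp
  have "filter isl (butlast \<sigma>) @ [Inl n] = map Inl [1..<n] @ [Inl n]"
    using arg_cong[OF sp, of "filter isl"] S upt_last[of n] n by (simp add: S_char)
  then show "filter isl (butlast \<sigma>) = map Inl [1..<n]" by simp
  show "filter (\<lambda>x. \<not> isl x) (butlast \<sigma>) = map Inr [1..<m+1]"
    using arg_cong[OF sp, of "filter (\<lambda>x. \<not> isl x)"] S by (simp add: S_char)
qed

lemma sb_S:
  assumes S: "\<sigma> \<in> shuffle_set n m" and n: "0 < n" and l: "last \<sigma> = Inl n"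
  shows "sigma_bar n \<sigma> \<in> shuffle_set n m"
proof -
  note sp = sb_split[OF S n l]
  have m1: "map (nu_inv_idx n) (map Inl [1..<n]) = map Inl [2..<n+1]"
  proof -
    have "map (nu_inv_idx n) (map Inl [1..<n]) = map (\<lambda>k. Inl (Suc k)) [1..<n]" by auto
    also have "\<dots> = map Inl (map Suc [1..<n])" by simp
    also have "\<dots> = map Inl [2..<n+1]" by (simp add: map_Suc_upt numeral_2_eq_2)
    finally show ?thesis .
  qed
  have "filter isl (sigma_bar n \<sigma>) = map Inl [1..<n+1]"
    unfolding sigma_bar_def using sp(2) m1 upt_first[of n] n by (simp add: filter_isl_map_nu)
  moreover have "filter (\<lambda>x. \<not> isl x) (sigma_bar n \<sigma>) = map Inr [1..<m+1]"
    unfolding sigma_bar_def using sp(3) by (simp add: filter_nisl_map_nu)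
  ultimately show ?thesis by (simp add: S_char)
qed

lemma sb_cc1: "cc (sigma_bar n \<sigma>) (Suc 0) = 0" by (simp add: sigma_bar_def cc_def)

lemma sb_cc:
  assumes S: "\<sigma> \<in> shuffle_set n m" and n: "0 < n" and l: "last \<sigma> = Inl n" and i: "1 \<le> i" "i < n"
  shows "cc (sigma_bar n \<sigma>) (Suc i) = cc \<sigma> i"
proof -
  note sp = sb_split[OF S n l]
  let ?bl = "butlast \<sigma>"
  have setbl: "set ?bl \<subseteq> Iset n m" using S by (auto dest: in_set_butlastD simp: shuffle_set_def)
  have tw: "takeWhile ((\<lambda>y. y \<noteq> Inl (Suc i)) \<circ> nu_inv_idx n) ?bl = takeWhile (\<lambda>y. y \<noteq> Inl i) ?bl"
  proof (rule takeWhile_cong)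
    fix x assume "x \<in> set ?bl"
    then have "x \<in> Iset n m" using setbl by blast
    then show "((\<lambda>y. y \<noteq> Inl (Suc i)) \<circ> nu_inv_idx n) x = (x \<noteq> Inl i)"
      using i unfolding Iset_def by (auto split: if_splits)
  qed simp
  have inbl: "Inl i \<in> set ?bl"
  proof -
    have "Inl i \<in> set \<sigma>" using Inl_in[OF S i(1)] i by simp
    moreover have "set \<sigma> = set (?bl @ [Inl n])" using arg_cong[OF sp(1), of set] .
    ultimately show ?thesis using i by simp
  qed
  have tw2: "takeWhile (\<lambda>y. y \<noteq> Inl i) \<sigma> = takeWhile (\<lambda>y. y \<noteq> Inl i) ?bl"
  proof -
    have "takeWhile (\<lambda>y. y \<noteq> Inl i) \<sigma> = takeWhile (\<lambda>y. y \<noteq> Inl i) (?bl @ [Inl n])"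
      using arg_cong[OF sp(1), of "takeWhile (\<lambda>y. y \<noteq> Inl i)"] .
    also have "\<dots> = takeWhile (\<lambda>y. y \<noteq> Inl i) ?bl" by (rule takeWhile_append1[OF inbl]) simp
    finally show ?thesis .
  qed
  have "cc (sigma_bar n \<sigma>) (Suc i) = length (filter (\<lambda>x. \<not> isl x) (map (nu_inv_idx n) (takeWhile ((\<lambda>y. y \<noteq> Inl (Suc i)) \<circ> nu_inv_idx n) ?bl)))"
    unfolding cc_def sigma_bar_def using i by (simp add: takeWhile_map)
  also have "\<dots> = cc \<sigma> i" unfolding tw filter_nisl_map_nu cc_def tw2 ..
  finally show ?thesis .
qed

lemma sb_zeta:
  assumes S: "\<sigma> \<in> shuffle_set n m" and n: "0 < n" and l: "last \<sigma> = Inl n"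
  shows "zeta n (sigma_bar n \<sigma>) = lam_bar (zeta n \<sigma>)"
proof (rule nth_equalityI)
  show "length (zeta n (sigma_bar n \<sigma>)) = length (lam_bar (zeta n \<sigma>))"
    using lam_bar_len[OF zeta_len n] by (simp add: zeta_len)
  fix k assume "k < length (zeta n (sigma_bar n \<sigma>))"
  then have k: "k < n" by (simp add: zeta_len)
  show "zeta n (sigma_bar n \<sigma>) ! k = lam_bar (zeta n \<sigma>) ! k"
  proof (cases "k < n - 1")
    case True
    then have e: "n - k = Suc (n - Suc k)" "1 \<le> n - Suc k" "n - Suc k < n" by auto
    show ?thesis using True k sb_cc[OF S n l e(2,3)]
      by (simp add: lam_bar_nth[OF zeta_len n] zeta_nth e(1))
  next
    case False
    then have "n - k = 1" using k by simp
    then show ?thesis using False k by (simp add: lam_bar_nth[OF zeta_len n] zeta_nth sb_cc1)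
  qed
qed



lemma immT:
  assumes S: "\<sigma> \<in> shuffle_set n m" and i: "1 \<le> i" "i \<le> n" and j: "1 \<le> j" "j \<le> m"
  shows "imm_prec \<sigma> (Inl i) (Inr j) \<longleftrightarrow> (j = cc \<sigma> i + 1 \<and> (i < n \<longrightarrow> j \<le> cc \<sigma> (Suc i)))"
proof
  assume "imm_prec \<sigma> (Inl i) (Inr j)"
  then obtain k where k: "k + 1 < length \<sigma>" "\<sigma>!k = Inl i" "\<sigma>!(k+1) = Inr j" unfolding imm_prec_def by blast
  have kq: "idxl \<sigma> (Inl i) = k" using idxl_nth[OF S_distinct[OF S], of k] k by simp
  have b1: "BcN \<sigma> (k+1) = BcN \<sigma> k" using BcN_Suc[of k \<sigma>] k by simp
  have "\<sigma>!(k+1) = Inr (BcN \<sigma> (k+1) + 1)" using L_nth[OF S k(1)] k(3) by simp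
  then have jv: "j = cc \<sigma> i + 1" using k(3) b1 cc_eq[of \<sigma> i] kq by simp
  moreover have "i < n \<longrightarrow> j \<le> cc \<sigma> (Suc i)"
  proof
    assume "i < n"
    then have si: "1 \<le> Suc i" "Suc i \<le> n" by auto
    let ?q = "idxl \<sigma> (Inl (Suc i))"
    have "k < ?q" using q_mono[OF S i(1), of "Suc i"] si kq by simp
    moreover have "?q \<noteq> k + 1" using q_nth[OF S si] k(3) by auto
    ultimately have kq2: "k + 2 \<le> ?q" by simp
    have "BcN \<sigma> (k+2) = BcN \<sigma> (k+1) + 1" using BcN_Suc[of "k+1" \<sigma>] k by simp
    then have "j \<le> BcN \<sigma> (k+2)" using jv b1 cc_eq[of \<sigma> i] kq by simp
    also have "\<dots> \<le> BcN \<sigma> ?q" using BcN_mono kq2 by blast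
    finally show "j \<le> cc \<sigma> (Suc i)" using cc_eq by simp
  qed
  ultimately show "j = cc \<sigma> i + 1 \<and> (i < n \<longrightarrow> j \<le> cc \<sigma> (Suc i))" by simp
next
  assume h: "j = cc \<sigma> i + 1 \<and> (i < n \<longrightarrow> j \<le> cc \<sigma> (Suc i))"
  let ?k = "idxl \<sigma> (Inl i)"
  have kl: "?k < length \<sigma>" and kn: "\<sigma>!?k = Inl i" and ka: "Ac \<sigma> ?k = i - 1"
    using q_lt[OF S i] q_nth[OF S i] q_Ac[OF S i] by auto
  have bk: "BcN \<sigma> ?k = cc \<sigma> i" using cc_eq by simp
  have k1: "?k + 1 < length \<sigma>"
  proof (rule ccontr)
    assume "\<not> ?thesis"
    then have "?k + 1 = length \<sigma>" using kl by simp
    then have "BcN \<sigma> (?k+1) = m" using BcN_len[OF S] by simp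
    moreover have "BcN \<sigma> (?k+1) = BcN \<sigma> ?k" using BcN_Suc[OF kl] kn by simp
    ultimately show False using h bk j by simp
  qed
  have nisl: "\<not> isl (\<sigma>!(?k+1))"
  proof
    assume isl: "isl (\<sigma>!(?k+1))"
    have a1: "Ac \<sigma> (?k+1) = i" using Ac_Suc[OF kl] kn ka i by simp
    have e: "\<sigma>!(?k+1) = Inl (Suc i)" "i < n" using L_nth[OF S k1] isl a1 by auto
    have "idxl \<sigma> (Inl (Suc i)) = ?k + 1" using idxl_nth[OF S_distinct[OF S] k1] e by simp
    then have "cc \<sigma> (Suc i) = BcN \<sigma> (?k+1)" using cc_eq by simp
    also have "\<dots> = cc \<sigma> i" using BcN_Suc[OF kl] kn bk by simp
    finally show False using h e(2) by auto
  qed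
  have "\<sigma>!(?k+1) = Inr (BcN \<sigma> (?k+1) + 1)" using L_nth[OF S k1] nisl by simp
  also have "BcN \<sigma> (?k+1) = cc \<sigma> i" using BcN_Suc[OF kl] kn bk by simp
  finally have "\<sigma>!(?k+1) = Inr j" using h by simp
  then show "imm_prec \<sigma> (Inl i) (Inr j)" unfolding imm_prec_def using k1 kn by blast
qed

lemma immF:
  assumes S: "\<sigma> \<in> shuffle_set n m" and i: "1 \<le> i" "i \<le> n" and j: "1 \<le> j" "j \<le> m"
  shows "imm_prec \<sigma> (Inr j) (Inl i) \<longleftrightarrow> (j = cc \<sigma> i \<and> (1 < i \<longrightarrow> cc \<sigma> (i - 1) < j))"
proof
  assume "imm_prec \<sigma> (Inr j) (Inl i)"
  then obtain k where k: "k + 1 < length \<sigma>" "\<sigma>!k = Inr j" "\<sigma>!(k+1) = Inl i" unfolding imm_prec_def by blast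
  have kl: "k < length \<sigma>" using k by simp
  have kq: "idxl \<sigma> (Inl i) = k + 1" using idxl_nth[OF S_distinct[OF S], of "k+1"] k by simp
  have b1: "BcN \<sigma> (k+1) = BcN \<sigma> k + 1" using BcN_Suc[OF kl] k by simp
  have "\<sigma>!k = Inr (BcN \<sigma> k + 1)" using L_nth[OF S kl] k(2) by simp
  then have jv: "j = cc \<sigma> i" using k(2) b1 cc_eq[of \<sigma> i] kq by simp
  moreover have "1 < i \<longrightarrow> cc \<sigma> (i - 1) < j"
  proof
    assume "1 < i"
    then have si: "1 \<le> i - 1" "i - 1 < i" by auto
    let ?q = "idxl \<sigma> (Inl (i - 1))"
    have "?q < k + 1" using q_mono[OF S si(1) si(2) i(2)] kq by simp
    have "i - 1 \<le> n" using i by simp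
    then have qn: "\<sigma> ! ?q = Inl (i - 1)" using q_nth[OF S si(1)] by simp
    have "?q < k + 1" using q_mono[OF S si(1) si(2) i(2)] kq by simp
    moreover have "?q \<noteq> k" using qn k(2) by auto
    ultimately have "?q \<le> k" by simp
    then have "BcN \<sigma> ?q \<le> BcN \<sigma> k" by (rule BcN_mono)
    then show "cc \<sigma> (i - 1) < j" using jv b1 cc_eq[of \<sigma> i] cc_eq[of \<sigma> "i-1"] kq by simp
  qed
  ultimately show "j = cc \<sigma> i \<and> (1 < i \<longrightarrow> cc \<sigma> (i - 1) < j)" by simp
next
  assume h: "j = cc \<sigma> i \<and> (1 < i \<longrightarrow> cc \<sigma> (i - 1) < j)"
  let ?K = "idxl \<sigma> (Inl i)"
  have Kl: "?K < length \<sigma>" and Kn: "\<sigma>!?K = Inl i" and Ka: "Ac \<sigma> ?K = i - 1"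
    using q_lt[OF S i] q_nth[OF S i] q_Ac[OF S i] by auto
  have bK: "BcN \<sigma> ?K = j" using cc_eq h by simp
  have K0: "?K \<noteq> 0"
  proof
    assume "?K = 0"
    then have "BcN \<sigma> ?K = 0" using BcN_0[of \<sigma>] by simp
    then show False using bK j by simp
  qed
  define k where "k = ?K - 1"
  have kK: "?K = Suc k" using K0 k_def by simp
  have kl: "k < length \<sigma>" using Kl kK by simp
  have nisl: "\<not> isl (\<sigma>!k)"
  proof
    assume isl: "isl (\<sigma>!k)"
    have e: "\<sigma>!k = Inl (Ac \<sigma> k + 1)" using L_nth[OF S kl] isl by simp
    have a: "Ac \<sigma> ?K = Ac \<sigma> k + 1" using Ac_Suc[OF kl] isl kK by simp
    then have i2: "1 < i" "Ac \<sigma> k + 1 = i - 1" using Ka by auto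
    have "idxl \<sigma> (Inl (i - 1)) = k" using idxl_nth[OF S_distinct[OF S] kl] e i2 by simp
    then have "cc \<sigma> (i - 1) = BcN \<sigma> k" using cc_eq by simp
    also have "\<dots> = BcN \<sigma> ?K" using BcN_Suc[OF kl] isl kK by simp
    finally show False using h i2 bK by simp
  qed
  have "\<sigma>!k = Inr (BcN \<sigma> k + 1)" using L_nth[OF S kl] nisl by simp
  moreover have "BcN \<sigma> ?K = BcN \<sigma> k + 1" using BcN_Suc[OF kl] nisl kK by simp
  ultimately have "\<sigma>!k = Inr j" using bK by simp
  moreover have "\<sigma>!(k+1) = Inl i" using Kn kK by simp
  moreover have "k + 1 < length \<sigma>" using Kl kK by simp
  ultimately show "imm_prec \<sigma> (Inr j) (Inl i)" unfolding imm_prec_def by blast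
qed

lemma XcT_zeta:
  assumes S: "\<sigma> \<in> shuffle_set n m" and i: "1 \<le> i" "i \<le> n" and j: "1 \<le> j" "j \<le> m"
  shows "zeta n \<sigma> \<in> Xc n m (True,i,j) \<longleftrightarrow> imm_prec \<sigma> (Inl i) (Inr j)"
proof -
  have r1: "zeta n \<sigma> ! (n - i) = cc \<sigma> i" using zeta_row[OF i] .
  have r2: "i < n \<Longrightarrow> zeta n \<sigma> ! (n - i - 1) = cc \<sigma> (Suc i)"
  proof -
    assume "i < n"
    then have "n - i - 1 = n - Suc i" "1 \<le> Suc i" "Suc i \<le> n" by auto
    then show ?thesis using zeta_row[of "Suc i" n \<sigma>] by simp
  qed
  have e: "(i < n \<longrightarrow> j \<le> zeta n \<sigma> ! (n-i-1)) \<longleftrightarrow> (i < n \<longrightarrow> j \<le> cc \<sigma> (Suc i))" using r2 by auto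
  show ?thesis unfolding XcT_char immT[OF S i j] e r1 using zeta_X[OF S] i j by simp
qed

lemma XcF_zeta:
  assumes S: "\<sigma> \<in> shuffle_set n m" and i: "1 \<le> i" "i \<le> n" and j: "1 \<le> j" "j \<le> m"
  shows "zeta n \<sigma> \<in> Xc n m (False,i,j) \<longleftrightarrow> imm_prec \<sigma> (Inr j) (Inl i)"
proof -
  have r1: "zeta n \<sigma> ! (n - i) = cc \<sigma> i" using zeta_row[OF i] .
  have r2: "1 < i \<Longrightarrow> zeta n \<sigma> ! (n - i + 1) = cc \<sigma> (i - 1)"
  proof -
    assume "1 < i"
    then have "n - i + 1 = n - (i - 1)" "1 \<le> i - 1" "i - 1 \<le> n" using i by auto
    then show ?thesis using zeta_row[of "i - 1" n \<sigma>] by simp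
  qed
  have e: "(1 < i \<longrightarrow> zeta n \<sigma> ! (n-i+1) < j) \<longleftrightarrow> (1 < i \<longrightarrow> cc \<sigma> (i - 1) < j)" using r2 by auto
  show ?thesis unfolding XcF_char immF[OF S i j] e r1 using zeta_X[OF S] i j by simp
qed



lemma imm_split: "imm_prec \<sigma> u v \<Longrightarrow> \<exists>X Y. \<sigma> = X @ u # v # Y"
proof -
  assume "imm_prec \<sigma> u v"
  then obtain k where k: "k + 1 < length \<sigma>" "\<sigma>!k = u" "\<sigma>!(k+1) = v" unfolding imm_prec_def by blast
  have kk: "k < length \<sigma>" "Suc k < length \<sigma>" using k by auto
  have "drop k \<sigma> = \<sigma>!k # drop (Suc k) \<sigma>" using Cons_nth_drop_Suc[OF kk(1)] by simp
  moreover have "drop (Suc k) \<sigma> = \<sigma>!(Suc k) # drop (Suc (Suc k)) \<sigma>" using Cons_nth_drop_Suc[OF kk(2)] by simp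
  ultimately have "\<sigma> = take k \<sigma> @ u # v # drop (Suc (Suc k)) \<sigma>" using k
    by (metis Suc_eq_plus1 append_take_drop_id)
  then show ?thesis by blast
qed

lemma swap_eq:
  assumes d: "distinct (X @ a # b # Y)" and ab: "(a = Inl i \<and> b = Inr j) \<or> (a = Inr j \<and> b = Inl i)"
  shows "swap_ij i j (X @ a # b # Y) = X @ b # a # Y"
proof -
  let ?f = "\<lambda>x. if x = Inl i then Inr j else if x = Inr j then Inl i else x"
  have "a \<notin> set X" "b \<notin> set X" "a \<notin> set Y" "b \<notin> set Y" using d by auto
  then have "\<forall>x\<in>set X. ?f x = x" "\<forall>x\<in>set Y. ?f x = x" using ab by auto
  then have "map ?f X = X" "map ?f Y = Y" by (simp_all add: map_idI)
  then show ?thesis unfolding swap_ij_def using ab by auto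
qed

lemma swap_S_gen: "X @ a # b # Y \<in> shuffle_set n m \<Longrightarrow> isl a \<noteq> isl b \<Longrightarrow> X @ b # a # Y \<in> shuffle_set n m"
  unfolding S_char by (cases "isl a") auto

lemma cc_swap_other:
  assumes "Inl i' \<noteq> a" "Inl i' \<noteq> b"
  shows "cc (X @ a # b # Y) i' = cc (X @ b # a # Y) i'"
proof (cases "\<forall>x\<in>set X. x \<noteq> Inl i'")
  case True
  then show ?thesis unfolding cc_def using assms by (simp add: takeWhile_append2)
next
  case False
  then obtain x where "x \<in> set X" "\<not> x \<noteq> Inl i'" by blast
  then show ?thesis unfolding cc_def by (simp add: takeWhile_append1)
qed

lemma cc_self1: "Inl i \<notin> set X \<Longrightarrow> cc (X @ Inl i # Y) i = length (filter (\<lambda>x. \<not> isl x) X)"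
  unfolding cc_def by (subst takeWhile_append2) auto

lemma cc_self2: "Inl i \<notin> set X \<Longrightarrow> cc (X @ Inr j # Inl i # Y) i = length (filter (\<lambda>x. \<not> isl x) X) + 1"
  unfolding cc_def by (subst takeWhile_append2) auto

lemma swap_T:
  assumes S: "\<sigma> \<in> shuffle_set n m" and i: "1 \<le> i" "i \<le> n" and imm: "imm_prec \<sigma> (Inl i) (Inr j)"
  shows "swap_ij i j \<sigma> \<in> shuffle_set n m \<and> zeta n (swap_ij i j \<sigma>) = t_op n (True,i,j) (zeta n \<sigma>)"
proof -
  obtain X Y where s: "\<sigma> = X @ Inl i # Inr j # Y" using imm_split[OF imm] by blast
  let ?\<tau> = "X @ Inr j # Inl i # Y"
  have d: "distinct (X @ Inl i # Inr j # Y)" using S_distinct[OF S] s by simp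
  have sw: "swap_ij i j \<sigma> = ?\<tau>" using swap_eq[OF d] s by simp
  have T: "?\<tau> \<in> shuffle_set n m" using swap_S_gen[of X "Inl i" "Inr j" Y] S s by simp
  have nX: "Inl i \<notin> set X" using d by simp
  have c1: "cc ?\<tau> i = cc \<sigma> i + 1" using cc_self1[OF nX, of "Inr j # Y"] cc_self2[OF nX, of j Y] s by simp
  have c2: "cc ?\<tau> i' = cc \<sigma> i'" if "i' \<noteq> i" for i'
    using cc_swap_other[of i' "Inl i" "Inr j" X Y] that s by simp
  have "zeta n ?\<tau> = (zeta n \<sigma>)[n - i := zeta n \<sigma> ! (n - i) + 1]"
  proof (rule nth_equalityI)
    show "length (zeta n ?\<tau>) = length ((zeta n \<sigma>)[n - i := zeta n \<sigma> ! (n - i) + 1])" by (simp add: zeta_len)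
    fix k assume "k < length (zeta n ?\<tau>)"
    then have k: "k < n" by (simp add: zeta_len)
    show "zeta n ?\<tau> ! k = (zeta n \<sigma>)[n - i := zeta n \<sigma> ! (n - i) + 1] ! k"
    proof (cases "k = n - i")
      case True
      then have "n - k = i" using i by simp
      then show ?thesis using True k c1 zeta_nth[OF k] by (simp add: zeta_len zeta_nth)
    next
      case False
      then have "n - k \<noteq> i" using i k by auto
      then show ?thesis using False k c2[of "n-k"] by (simp add: zeta_len zeta_nth)
    qed
  qed
  then show ?thesis using sw T by simp
qed

lemma swap_F:
  assumes S: "\<sigma> \<in> shuffle_set n m" and i: "1 \<le> i" "i \<le> n" and imm: "imm_prec \<sigma> (Inr j) (Inl i)"
  shows "swap_ij i j \<sigma> \<in> shuffle_set n m \<and> zeta n (swap_ij i j \<sigma>) = t_op n (False,i,j) (zeta n \<sigma>)"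
proof -
  obtain X Y where s: "\<sigma> = X @ Inr j # Inl i # Y" using imm_split[OF imm] by blast
  let ?\<tau> = "X @ Inl i # Inr j # Y"
  have d: "distinct (X @ Inr j # Inl i # Y)" using S_distinct[OF S] s by simp
  have sw: "swap_ij i j \<sigma> = ?\<tau>" using swap_eq[OF d] s by simp
  have T: "?\<tau> \<in> shuffle_set n m" using swap_S_gen[of X "Inr j" "Inl i" Y] S s by simp
  have nX: "Inl i \<notin> set X" using d by simp
  have c1: "cc ?\<tau> i = cc \<sigma> i - 1" using cc_self1[OF nX, of "Inr j # Y"] cc_self2[OF nX, of j Y] s by simp
  have c2: "cc ?\<tau> i' = cc \<sigma> i'" if "i' \<noteq> i" for i'
    using cc_swap_other[of i' "Inr j" "Inl i" X Y] that s by simp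
  have "zeta n ?\<tau> = (zeta n \<sigma>)[n - i := zeta n \<sigma> ! (n - i) - 1]"
  proof (rule nth_equalityI)
    show "length (zeta n ?\<tau>) = length ((zeta n \<sigma>)[n - i := zeta n \<sigma> ! (n - i) - 1])" by (simp add: zeta_len)
    fix k assume "k < length (zeta n ?\<tau>)"
    then have k: "k < n" by (simp add: zeta_len)
    show "zeta n ?\<tau> ! k = (zeta n \<sigma>)[n - i := zeta n \<sigma> ! (n - i) - 1] ! k"
    proof (cases "k = n - i")
      case True
      then have "n - k = i" using i by simp
      then show ?thesis using True k c1 zeta_nth[OF k] by (simp add: zeta_len zeta_nth)
    next
      case False
      then have "n - k \<noteq> i" using i k by auto
      then show ?thesis using False k c2[of "n-k"] by (simp add: zeta_len zeta_nth)
    qed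
  qed
  then show ?thesis using sw T by simp
qed

lemma swap_op:
  assumes S: "\<sigma> \<in> shuffle_set n m" and i: "1 \<le> i" "i \<le> n" and j: "1 \<le> j" "j \<le> m"
    and X: "zeta n \<sigma> \<in> Xc n m (s,i,j)"
  shows "swap_ij i j \<sigma> \<in> shuffle_set n m \<and> zeta n (swap_ij i j \<sigma>) = t_op n (s,i,j) (zeta n \<sigma>)"
proof (cases s)
  case True
  then show ?thesis using swap_T[OF S i] XcT_zeta[OF S i j] X by simp
next
  case False
  then show ?thesis using swap_F[OF S i] XcF_zeta[OF S i j] X by simp
qed



lemma sum_update: "k < length xs \<Longrightarrow> sum_list (xs[k := v]) + xs!k = sum_list xs + (v::nat)"
proof (induction xs arbitrary: k)
  case Nil then show ?case by simp
next
  case (Cons a xs) then show ?case by (cases k) auto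
qed

definition s0 :: "nat \<Rightarrow> nat \<Rightarrow> idx list" where
  "s0 n m = map Inl [1..<n+1] @ map Inr [1..<m+1]"

lemma s0_S: "s0 n m \<in> shuffle_set n m"
  unfolding S_char s0_def by (simp add: filter_map o_def)

lemma s0_cc: assumes "1 \<le> i" "i \<le> n" shows "cc (s0 n m) i = 0"
proof -
  have in1: "Inl i \<in> set (map Inl [1..<n+1])" using assms by auto
  have "takeWhile (\<lambda>x. x \<noteq> Inl i) (s0 n m) = takeWhile (\<lambda>x. x \<noteq> Inl i) (map Inl [1..<n+1])"
    unfolding s0_def by (rule takeWhile_append1[OF in1]) simp
  moreover have "\<forall>x\<in>set (takeWhile (\<lambda>x. x \<noteq> Inl i) (map Inl [1..<n+1])). isl x"
  proof
    fix x assume "x \<in> set (takeWhile (\<lambda>x. x \<noteq> Inl i) (map Inl [1..<n+1]))"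
    then have "x \<in> set (map Inl [1..<n+1])" by (blast dest: set_takeWhileD)
    then show "isl x" by auto
  qed
  ultimately show ?thesis unfolding cc_def by (simp add: filter_empty_conv)
qed

lemma zeta_surj:
  assumes n: "0 < n"
  shows "lam \<in> Xset n m \<Longrightarrow> \<exists>\<sigma>\<in>shuffle_set n m. zeta n \<sigma> = lam"
proof (induction "sum_list lam" arbitrary: lam rule: less_induct)
  case less
  have ln: "length lam = n" using less.prems by (simp add: Xset_def)
  show ?case
  proof (cases "sum_list lam = 0")
    case True
    then have z: "\<forall>x\<in>set lam. x = 0" by simp
    have "zeta n (s0 n m) = lam"
    proof (rule nth_equalityI)
      show "length (zeta n (s0 n m)) = length lam" using ln by (simp add: zeta_len)
      fix k assume "k < length (zeta n (s0 n m))"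
      then have k: "k < n" by (simp add: zeta_len)
      then have "lam ! k = 0" using z ln by auto
      moreover have "cc (s0 n m) (n - k) = 0" using s0_cc[of "n-k" n m] k by simp
      ultimately show "zeta n (s0 n m) ! k = lam ! k" using k by (simp add: zeta_nth)
    qed
    then show ?thesis using s0_S by blast
  next
    case False
    let ?A = "{k. k < n \<and> 0 < lam ! k}"
    have "\<exists>x\<in>set lam. x \<noteq> 0" using False by simp
    then have Ane: "?A \<noteq> {}" using ln by (auto simp: in_set_conv_nth)
    have Afin: "finite ?A" by simp
    define K where "K = Max ?A"
    have KA: "K \<in> ?A" using Max_in[OF Afin Ane] K_def by simp
    have Kmax: "\<And>k'. K < k' \<Longrightarrow> k' < n \<Longrightarrow> lam ! k' = 0"
      using Max_ge[OF Afin] K_def by (metis (mono_tags, lifting) bot_nat_0.not_eq_extremum leD mem_Collect_eq)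
    define i where "i = n - K"
    define j where "j = lam ! K"
    have i: "1 \<le> i" "i \<le> n" "n - i = K" using KA i_def by auto
    have j: "1 \<le> j" "j \<le> m" using KA j_def less.prems unfolding Xset_char by auto
    have lF: "lam \<in> Xc n m (False,i,j)"
      unfolding XcF_char
    proof (intro conjI impI)
      show "lam \<in> Xset n m" by (rule less.prems)
      show "1 \<le> i" "i \<le> n" "1 \<le> j" using i j by auto
      show "j = lam ! (n - i)" using i j_def by simp
      assume "1 < i"
      then have "K < n - i + 1" "n - i + 1 < n" using i by auto
      then show "lam ! (n - i + 1) < j" using Kmax j by simp
    qed
    let ?lam' = "t_op n (False,i,j) lam"
    have l': "?lam' \<in> Xc n m (True,i,j)" "t_op n (True,i,j) ?lam' = lam"
      using t_op_neg[OF lF] by auto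
    have "?lam' = lam[K := j - 1]" using i j_def by simp
    then have "sum_list ?lam' + lam ! K = sum_list lam + (j - 1)" using sum_update[of K lam "j - 1"] KA ln by simp
    then have "sum_list ?lam' < sum_list lam" using j j_def by simp
    then obtain \<sigma>' where S': "\<sigma>' \<in> shuffle_set n m" and z': "zeta n \<sigma>' = ?lam'"
      using less.hyps[of ?lam'] Xc_sub[OF l'(1)] by blast
    have "swap_ij i j \<sigma>' \<in> shuffle_set n m \<and> zeta n (swap_ij i j \<sigma>') = t_op n (True,i,j) (zeta n \<sigma>')"
      using swap_op[OF S' i(1,2) j] l'(1) z' by simp
    then show ?thesis using l'(2) z' by auto
  qed
qed

lemma zeta_bij: "0 < n \<Longrightarrow> bij_betw (zeta n) (shuffle_set n m) (Xset n m)"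
  unfolding bij_betw_def inj_on_def using zeta_inj zeta_X zeta_surj by blast

section \<open>Borel subalgebras\<close>

lemma take_set_idx: assumes d: "distinct xs" and c: "c \<le> length xs"
  shows "{v \<in> set xs. idxl xs v < c} = set (take c xs)"
proof
  show "{v \<in> set xs. idxl xs v < c} \<subseteq> set (take c xs)"
  proof clarify
    fix v assume v: "v \<in> set xs" "idxl xs v < c"
    have "xs ! idxl xs v = v" "idxl xs v < length xs" using idxl_lt[OF v(1)] by auto
    then show "v \<in> set (take c xs)" using v c by (metis in_set_conv_nth length_take min.absorb4 nth_take min_less_iff_conj)
  qed
next
  show "set (take c xs) \<subseteq> {v \<in> set xs. idxl xs v < c}"
  proof
    fix v assume "v \<in> set (take c xs)"
    then obtain k where k: "k < length (take c xs)" "take c xs ! k = v" by (auto simp: in_set_conv_nth)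
    then have k2: "k < c" "k < length xs" "xs ! k = v" by auto
    then have "idxl xs v = k" using idxl_nth[OF d k2(2)] by simp
    moreover have "v \<in> set xs" using k2(2,3) by (metis nth_mem)
    ultimately show "v \<in> {v \<in> set xs. idxl xs v < c}" using k2 by auto
  qed
qed

lemma idx_card: assumes d: "distinct xs" and u: "u \<in> set xs"
  shows "card {v \<in> set xs. idxl xs v < idxl xs u} = idxl xs u"
proof -
  have l: "idxl xs u \<le> length xs" using idxl_lt[OF u] by simp
  have "card (set (take (idxl xs u) xs)) = idxl xs u"
    using distinct_card[OF distinct_take[OF d]] l by simp
  then show ?thesis using take_set_idx[OF d l] by simp
qed

lemma list_eq_idx:
  assumes ds: "distinct s" and dt: "distinct t" and st: "set s = set t"
    and o: "\<forall>u\<in>set s. \<forall>v\<in>set s. idxl s v < idxl s u \<longleftrightarrow> idxl t v < idxl t u"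
  shows "s = t"
proof -
  have eqi: "idxl s u = idxl t u" if u: "u \<in> set s" for u
  proof -
    have "{v \<in> set s. idxl s v < idxl s u} = {v \<in> set t. idxl t v < idxl t u}" using o u st by auto
    then show ?thesis using idx_card[OF ds u] idx_card[OF dt] u st by metis
  qed
  have len: "length s = length t" using distinct_card[OF ds] distinct_card[OF dt] st by simp
  show ?thesis
  proof (rule nth_equalityI)
    show "length s = length t" by (rule len)
    fix k assume k: "k < length s"
    let ?u = "s ! k"
    have u: "?u \<in> set s" using k by simp
    have "idxl t ?u = k" using eqi[OF u] idxl_nth[OF ds k] by simp
    moreover have "t ! idxl t ?u = ?u" using idxl_lt[of ?u t] u st by simp
    ultimately show "s ! k = t ! k" by simp
  qed
qed

lemma precedes_idx: assumes d: "distinct xs" and u: "u \<in> set xs" and v: "v \<in> set xs"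
  shows "precedes xs u v \<longleftrightarrow> idxl xs u < idxl xs v"
proof
  assume "precedes xs u v"
  then obtain k l where kl: "k < l" "l < length xs" "xs ! k = u" "xs ! l = v" unfolding precedes_def by blast
  then show "idxl xs u < idxl xs v" using idxl_nth[OF d, of k] idxl_nth[OF d, of l] by simp
next
  assume "idxl xs u < idxl xs v"
  then show "precedes xs u v" unfolding precedes_def using idxl_lt[OF u] idxl_lt[OF v] by blast
qed

lemma borel_E: "(\<lambda>a b. if a = u \<and> b = v then (1::complex) else 0) \<in> borel \<sigma> \<longleftrightarrow>
   (u \<in> set \<sigma> \<and> v \<in> set \<sigma> \<and> (u = v \<or> precedes \<sigma> u v))"
  unfolding borel_def by auto

lemma borel_inj: assumes S: "\<sigma> \<in> shuffle_set n m" and T: "\<tau> \<in> shuffle_set n m"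
  and b: "borel \<sigma> = borel \<tau>" shows "\<sigma> = \<tau>"
proof (rule list_eq_idx)
  show ds: "distinct \<sigma>" and dt: "distinct \<tau>" using S T by (auto simp: shuffle_set_def)
  show st: "set \<sigma> = set \<tau>" using S T by (auto simp: shuffle_set_def)
  show "\<forall>u\<in>set \<sigma>. \<forall>v\<in>set \<sigma>. idxl \<sigma> v < idxl \<sigma> u \<longleftrightarrow> idxl \<tau> v < idxl \<tau> u"
  proof (intro ballI)
    fix u v assume u: "u \<in> set \<sigma>" and v: "v \<in> set \<sigma>"
    show "idxl \<sigma> v < idxl \<sigma> u \<longleftrightarrow> idxl \<tau> v < idxl \<tau> u"
    proof (cases "u = v")
      case True then show ?thesis by simp
    next
      case False
      have "precedes \<sigma> v u \<longleftrightarrow> precedes \<tau> v u"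
        using borel_E[of v u \<sigma>] borel_E[of v u \<tau>] b u v st False by auto
      then show ?thesis using precedes_idx[OF ds v u] precedes_idx[OF dt, of v u] u v st by simp
    qed
  qed
qed

lemma r_op_borel: assumes S: "\<sigma> \<in> shuffle_set n m"
  shows "r_op n m (s,i,j) (borel \<sigma>) = borel (swap_ij i j \<sigma>)"
proof -
  have "(THE b'. \<exists>\<tau>\<in>shuffle_set n m. borel \<sigma> = borel \<tau> \<and> b' = borel (swap_ij i j \<tau>)) = borel (swap_ij i j \<sigma>)"
  proof (rule the_equality)
    show "\<exists>\<tau>\<in>shuffle_set n m. borel \<sigma> = borel \<tau> \<and> borel (swap_ij i j \<sigma>) = borel (swap_ij i j \<tau>)"
      using S by blast
    fix b' assume "\<exists>\<tau>\<in>shuffle_set n m. borel \<sigma> = borel \<tau> \<and> b' = borel (swap_ij i j \<tau>)"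
    then obtain \<tau> where "\<tau> \<in> shuffle_set n m" "borel \<sigma> = borel \<tau>" "b' = borel (swap_ij i j \<tau>)" by blast
    then show "b' = borel (swap_ij i j \<sigma>)" using borel_inj[OF S] by metis
  qed
  then show ?thesis by simp
qed



section \<open>Transfer to Borel side\<close>

lemma trancl_map_into: "(x,y) \<in> Q\<^sup>+ \<Longrightarrow> (f x, f y) \<in> (map_prod f f ` Q)\<^sup>+"
proof (induction rule: trancl_induct)
  case (base y)
  then have "(f x, f y) \<in> map_prod f f ` Q" by (metis map_prod_simp rev_image_eqI)
  then show ?case by (rule r_into_trancl)
next
  case (step y z)
  have "(f y, f z) \<in> map_prod f f ` Q" using step(2) by (metis map_prod_simp rev_image_eqI)
  then show ?case using step(3) by (rule trancl_into_trancl[rotated])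
qed

lemma trancl_map_inj:
  assumes inj: "inj_on f A" and Q: "Q \<subseteq> A \<times> A"
  shows "(map_prod f f ` Q)\<^sup>+ = map_prod f f ` (Q\<^sup>+)"
proof
  show "map_prod f f ` (Q\<^sup>+) \<subseteq> (map_prod f f ` Q)\<^sup>+"
    using trancl_map_into[of _ _ Q f] by auto
next
  have QA: "Q\<^sup>+ \<subseteq> A \<times> A" using trancl_subset_Sigma[OF Q] .
  show "(map_prod f f ` Q)\<^sup>+ \<subseteq> map_prod f f ` (Q\<^sup>+)"
  proof clarify
    fix a b assume "(a,b) \<in> (map_prod f f ` Q)\<^sup>+"
    then show "(a,b) \<in> map_prod f f ` (Q\<^sup>+)"
    proof (induction rule: trancl_induct)
      case (base y) then show ?case by auto
    next
      case (step y z)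
      obtain x y1 where xy: "a = f x" "y = f y1" "(x,y1) \<in> Q\<^sup>+" using step(3) by auto
      obtain y2 z1 where yz: "y = f y2" "z = f z1" "(y2,z1) \<in> Q" using step(2) by auto
      have "y1 \<in> A" "y2 \<in> A" using xy(3) yz(3) QA Q by auto
      then have "y1 = y2" using inj xy(2) yz(1) by (auto dest: inj_onD)
      then have "(x,z1) \<in> Q\<^sup>+" using xy(3) yz(3) by (simp add: trancl_into_trancl)
      then show ?case using xy yz by (metis map_prod_simp rev_image_eqI)
    qed
  qed
qed

lemma eqcl_map_inj:
  assumes inj: "inj_on f A" and R: "R \<subseteq> A \<times> A"
  shows "eqcl (f ` A) (map_prod f f ` R) = map_prod f f ` eqcl A R"
proof -
  have c: "(map_prod f f ` R)\<inverse> = map_prod f f ` (R\<inverse>)" by auto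
  have u: "map_prod f f ` R \<union> (map_prod f f ` R)\<inverse> = map_prod f f ` (R \<union> R\<inverse>)"
    unfolding c image_Un ..
  have RR: "R \<union> R\<inverse> \<subseteq> A \<times> A" using R by auto
  have i: "Id_on (f ` A) = map_prod f f ` Id_on A" by (auto simp: Id_on_def)
  have "eqcl (f ` A) (map_prod f f ` R) = Id_on (f ` A) \<union> (map_prod f f ` R \<union> (map_prod f f ` R)\<inverse>)\<^sup>+"
    by (simp only: eqcl_def)
  also have "\<dots> = map_prod f f ` Id_on A \<union> map_prod f f ` ((R \<union> R\<inverse>)\<^sup>+)"
    by (simp only: u trancl_map_inj[OF inj RR] i)
  also have "\<dots> = map_prod f f ` eqcl A R" by (simp only: eqcl_def image_Un)
  finally show ?thesis .
qed

definition hB :: "nat \<Rightarrow> nat \<Rightarrow> nat list \<Rightarrow> mat set" where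
  "hB n m lam = borel (inv_into (shuffle_set n m) (zeta n) lam)"

abbreviation fk :: "nat \<Rightarrow> nat \<Rightarrow> nat list \<times> int \<Rightarrow> mat set \<times> int" where
  "fk n m \<equiv> map_prod (hB n m) id"

lemma hB_zeta: "0 < n \<Longrightarrow> \<sigma> \<in> shuffle_set n m \<Longrightarrow> hB n m (zeta n \<sigma>) = borel \<sigma>"
  unfolding hB_def using zeta_bij[of n m] by (simp add: bij_betw_def inv_into_f_f)

lemma inv_zeta: assumes "0 < n" "lam \<in> Xset n m"
  shows "inv_into (shuffle_set n m) (zeta n) lam \<in> shuffle_set n m \<and> zeta n (inv_into (shuffle_set n m) (zeta n) lam) = lam"
  using zeta_bij[OF assms(1), of m] assms(2)
  by (metis bij_betw_def bij_betw_inv_into_right inv_into_into)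

lemma hB_inj: assumes n: "0 < n" shows "inj_on (hB n m) (Xset n m)"
proof (rule inj_onI)
  fix a b assume a: "a \<in> Xset n m" and b: "b \<in> Xset n m" and e: "hB n m a = hB n m b"
  have "inv_into (shuffle_set n m) (zeta n) a = inv_into (shuffle_set n m) (zeta n) b"
    using borel_inj inv_zeta[OF n a] inv_zeta[OF n b] e unfolding hB_def by blast
  then show "a = b" using inv_zeta[OF n a] inv_zeta[OF n b] by metis
qed

lemma hB_img: assumes n: "0 < n" shows "hB n m ` Xset n m = Bset n m"
proof
  show "hB n m ` Xset n m \<subseteq> Bset n m" unfolding Bset_def hB_def using inv_zeta[OF n] by auto
  show "Bset n m \<subseteq> hB n m ` Xset n m"
  proof
    fix b assume "b \<in> Bset n m"
    then obtain \<sigma> where S: "\<sigma> \<in> shuffle_set n m" and b: "b = borel \<sigma>" unfolding Bset_def by blast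
    then show "b \<in> hB n m ` Xset n m" using hB_zeta[OF n S] zeta_X[OF S] by (metis image_eqI)
  qed
qed

lemma fk_inj: "0 < n \<Longrightarrow> inj_on (fk n m) (AX n m)"
  using hB_inj by (auto simp: inj_on_def)

lemma fk_img: "0 < n \<Longrightarrow> fk n m ` AX n m = Bset n m \<times> (UNIV :: int set)"
  using hB_img[of n m] by (simp add: map_prod_surj_on)

definition R0B :: "nat \<Rightarrow> nat \<Rightarrow> ((mat set \<times> int) \<times> (mat set \<times> int)) set" where
  "R0B n m = {((borel \<sigma>, k), (borel (sigma_bar n \<sigma>), k + 1)) | \<sigma> k.
        \<sigma> \<in> shuffle_set n m \<and> last \<sigma> = Inl n}"

lemma R0B_img: assumes n: "0 < n" shows "R0B n m = map_prod (fk n m) (fk n m) ` R0X n m"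
proof
  show "R0B n m \<subseteq> map_prod (fk n m) (fk n m) ` R0X n m"
  proof
    fix p assume "p \<in> R0B n m"
    then obtain \<sigma> k where p: "p = ((borel \<sigma>, k), (borel (sigma_bar n \<sigma>), k + 1))"
      and S: "\<sigma> \<in> shuffle_set n m" and l: "last \<sigma> = Inl n" unfolding R0B_def by blast
    let ?lam = "zeta n \<sigma>"
    have r: "((?lam, k), (lam_bar ?lam, k + 1)) \<in> R0X n m"
      unfolding R0X_def using zeta_X[OF S] zeta_first[OF S n] l by blast
    have "lam_bar ?lam = zeta n (sigma_bar n \<sigma>)" using sb_zeta[OF S n l] by simp
    then have "map_prod (fk n m) (fk n m) ((?lam, k), (lam_bar ?lam, k + 1)) = p"
      using p hB_zeta[OF n S] hB_zeta[OF n sb_S[OF S n l]] by simp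
    then show "p \<in> map_prod (fk n m) (fk n m) ` R0X n m" using r by (metis image_eqI)
  qed
  show "map_prod (fk n m) (fk n m) ` R0X n m \<subseteq> R0B n m"
  proof
    fix p assume "p \<in> map_prod (fk n m) (fk n m) ` R0X n m"
    then obtain q where q: "q \<in> R0X n m" and pq: "p = map_prod (fk n m) (fk n m) q" by (rule imageE)
    from q obtain lam k where p0: "q = ((lam, k), (lam_bar lam, k + 1))"
      and X: "lam \<in> Xset n m" and l0: "lam ! 0 = m" unfolding R0X_def by blast
    have p: "p = map_prod (fk n m) (fk n m) ((lam, k), (lam_bar lam, k + 1))" using pq p0 by simp
    let ?\<sigma> = "inv_into (shuffle_set n m) (zeta n) lam"
    have S: "?\<sigma> \<in> shuffle_set n m" and z: "zeta n ?\<sigma> = lam" using inv_zeta[OF n X] by auto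
    have l: "last ?\<sigma> = Inl n" using zeta_first[OF S n] z l0 by simp
    have "p = ((borel ?\<sigma>, k), (borel (sigma_bar n ?\<sigma>), k + 1))"
      using p hB_zeta[OF n S] hB_zeta[OF n sb_S[OF S n l]] sb_zeta[OF S n l] z by simp
    then show "p \<in> R0B n m" unfolding R0B_def using S l by blast
  qed
qed

lemma BZ_rel_img: assumes n: "0 < n" shows "BZ_rel n m = map_prod (fk n m) (fk n m) ` XZ_rel n m"
proof -
  have R: "R0X n m \<subseteq> AX n m \<times> AX n m" unfolding R0X_def using lam_bar_X[OF n] by auto
  have "BZ_rel n m = eqcl (Bset n m \<times> UNIV) (R0B n m)" unfolding BZ_rel_def R0B_def ..
  also have "\<dots> = eqcl (fk n m ` AX n m) (map_prod (fk n m) (fk n m) ` R0X n m)"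
    using fk_img[OF n] R0B_img[OF n] by simp
  also have "\<dots> = map_prod (fk n m) (fk n m) ` XZ_rel n m"
    unfolding XZ_rel_R0X by (rule eqcl_map_inj[OF fk_inj[OF n] R])
  finally show ?thesis .
qed

lemma clsB_img: assumes n: "0 < n" and m: "0 < m" and x: "x \<in> AX n m"
  shows "clsB n m (fk n m x) = fk n m ` clsX n m x"
proof -
  have sub: "XZ_rel n m \<subseteq> AX n m \<times> AX n m" using XZ_rel_char[OF n m] by auto
  show ?thesis
  proof
    show "clsB n m (fk n m x) \<subseteq> fk n m ` clsX n m x"
    proof
      fix y' assume "y' \<in> clsB n m (fk n m x)"
      then have "(fk n m x, y') \<in> map_prod (fk n m) (fk n m) ` XZ_rel n m"
        unfolding clsB_def BZ_rel_img[OF n] by simp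
      then obtain x' y where e: "fk n m x' = fk n m x" "y' = fk n m y" "(x', y) \<in> XZ_rel n m" by auto
      have "x' \<in> AX n m" using e(3) sub by auto
      then have "x' = x" using e(1) fk_inj[OF n] x by (auto dest: inj_onD)
      then show "y' \<in> fk n m ` clsX n m x" using e unfolding clsX_def by auto
    qed
    show "fk n m ` clsX n m x \<subseteq> clsB n m (fk n m x)"
    proof
      fix y' assume "y' \<in> fk n m ` clsX n m x"
      then obtain y where y: "y \<in> clsX n m x" "y' = fk n m y" by (rule imageE)
      then have xy: "(x, y) \<in> XZ_rel n m" unfolding clsX_def by simp
      have "(fk n m x, fk n m y) \<in> map_prod (fk n m) (fk n m) ` XZ_rel n m"
        by (rule image_eqI[OF _ xy]) simp
      then show "y' \<in> clsB n m (fk n m x)" unfolding clsB_def BZ_rel_img[OF n] using y by simp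
    qed
  qed
qed

definition Phi :: "nat \<Rightarrow> nat \<Rightarrow> (nat list \<times> int) set \<Rightarrow> (mat set \<times> int) set" where
  "Phi n m c = fk n m ` c"

lemma Phi_cls: "0 < n \<Longrightarrow> 0 < m \<Longrightarrow> x \<in> AX n m \<Longrightarrow> Phi n m (clsX n m x) = clsB n m (fk n m x)"
  unfolding Phi_def using clsB_img by simp

lemma XZ_elems: "c \<in> XZ n m \<Longrightarrow> \<exists>x\<in>AX n m. c = clsX n m x"
proof -
  assume "c \<in> XZ n m"
  then have "c \<in> AX n m // XZ_rel n m" unfolding XZ_def .
  then obtain x where "x \<in> AX n m" "c = XZ_rel n m `` {x}" by (rule quotientE)
  then show ?thesis unfolding clsX_def by blast
qed

lemma BZ_elems: "c \<in> BZ n m \<Longrightarrow> \<exists>y\<in>Bset n m \<times> (UNIV::int set). c = clsB n m y"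
proof -
  assume "c \<in> BZ n m"
  then have "c \<in> (Bset n m \<times> (UNIV::int set)) // BZ_rel n m" unfolding BZ_def .
  then obtain y where "y \<in> Bset n m \<times> (UNIV::int set)" "c = BZ_rel n m `` {y}" by (rule quotientE)
  then show ?thesis unfolding clsB_def by blast
qed

lemma cls_in_XZ: "x \<in> AX n m \<Longrightarrow> clsX n m x \<in> XZ n m"
  unfolding XZ_def clsX_def by (rule quotientI)

lemma cls_in_BZ: "y \<in> Bset n m \<times> (UNIV::int set) \<Longrightarrow> clsB n m y \<in> BZ n m"
  unfolding BZ_def clsB_def by (rule quotientI)

lemma Phi_bij: assumes n: "0 < n" and m: "0 < m" shows "bij_betw (Phi n m) (XZ n m) (BZ n m)"
  unfolding bij_betw_def
proof
  show "inj_on (Phi n m) (XZ n m)"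
  proof (rule inj_onI)
    fix c1 c2 assume c1: "c1 \<in> XZ n m" and c2: "c2 \<in> XZ n m" and e: "Phi n m c1 = Phi n m c2"
    have s: "c1 \<subseteq> AX n m" "c2 \<subseteq> AX n m"
      using c1 c2 XZ_elems clsX_char[OF n m] by blast+
    then show "c1 = c2" using inj_on_image_eq_iff[OF fk_inj[OF n] s(1) s(2)] e unfolding Phi_def by simp
  qed
  show "Phi n m ` XZ n m = BZ n m"
  proof
    show "Phi n m ` XZ n m \<subseteq> BZ n m"
    proof
      fix d assume "d \<in> Phi n m ` XZ n m"
      then obtain x where x: "x \<in> AX n m" and d: "d = Phi n m (clsX n m x)" using XZ_elems by blast
      have "fk n m x \<in> Bset n m \<times> (UNIV::int set)" using fk_img[OF n] x by blast
      then show "d \<in> BZ n m" using d Phi_cls[OF n m x] cls_in_BZ by simp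
    qed
    show "BZ n m \<subseteq> Phi n m ` XZ n m"
    proof
      fix d assume "d \<in> BZ n m"
      then obtain y where y: "y \<in> Bset n m \<times> (UNIV::int set)" and d: "d = clsB n m y" using BZ_elems by blast
      obtain x where x: "x \<in> AX n m" and yx: "y = fk n m x" using y fk_img[OF n] by (metis imageE)
      show "d \<in> Phi n m ` XZ n m" using d yx Phi_cls[OF n m x] cls_in_XZ[OF x] by (metis image_eqI)
    qed
  qed
qed



lemma nu_pow_range:
  assumes n: "0 < n" and a: "\<alpha> \<in> Delta_iso n m"
  shows "\<exists>s i jj. nu_pow n k \<alpha> = (s,i,jj) \<and> 1 \<le> i \<and> i \<le> n \<and> 1 \<le> jj \<and> jj \<le> m"
proof -
  obtain s i jj where al: "\<alpha> = (s,i,jj)" by (cases \<alpha>) auto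
  have r: "1 \<le> i" "i \<le> n" "1 \<le> jj" "jj \<le> m" using a al by (auto simp: Delta_iso_iff)
  show ?thesis using nu_pow_formula[OF n r(1,2), of k s jj] rowf_bounds[OF n, of i k] r al by auto
qed

lemma Bc_img:
  assumes n: "0 < n" and i: "1 \<le> i" "i \<le> n" and j: "1 \<le> j" "j \<le> m"
  shows "Bc n m (s,i,j) = hB n m ` Xc n m (s,i,j)"
proof
  show "Bc n m (s,i,j) \<subseteq> hB n m ` Xc n m (s,i,j)"
  proof
    fix b assume b: "b \<in> Bc n m (s,i,j)"
    then obtain \<sigma> where S: "\<sigma> \<in> shuffle_set n m" and bs: "b = borel \<sigma>"
      and imm: "if s then imm_prec \<sigma> (Inl i) (Inr j) else imm_prec \<sigma> (Inr j) (Inl i)"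
      by (cases s) auto
    have "zeta n \<sigma> \<in> Xc n m (s,i,j)" using imm XcT_zeta[OF S i j] XcF_zeta[OF S i j] by (cases s) auto
    then show "b \<in> hB n m ` Xc n m (s,i,j)" using hB_zeta[OF n S] bs by (metis image_eqI)
  qed
  show "hB n m ` Xc n m (s,i,j) \<subseteq> Bc n m (s,i,j)"
  proof
    fix b assume "b \<in> hB n m ` Xc n m (s,i,j)"
    then obtain lam where l: "lam \<in> Xc n m (s,i,j)" and b: "b = hB n m lam" by (rule imageE)
    let ?\<sigma> = "inv_into (shuffle_set n m) (zeta n) lam"
    have S: "?\<sigma> \<in> shuffle_set n m" and z: "zeta n ?\<sigma> = lam" using inv_zeta[OF n Xc_sub[OF l]] by auto
    have bb: "b = borel ?\<sigma>" using b hB_def by simp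
    show "b \<in> Bc n m (s,i,j)"
    proof (cases s)
      case True
      then have "imm_prec ?\<sigma> (Inl i) (Inr j)" using XcT_zeta[OF S i j] z l by simp
      then show ?thesis using True S bb by auto
    next
      case False
      then have "imm_prec ?\<sigma> (Inr j) (Inl i)" using XcF_zeta[OF S i j] z l by simp
      then show ?thesis using False S bb by auto
    qed
  qed
qed

lemma Bobj_img:
  assumes n: "0 < n" and m: "0 < m" and a: "\<alpha> \<in> Delta_iso n m"
  shows "Bobj n m \<alpha> = Phi n m ` Fobj n m \<alpha>"
proof
  show "Bobj n m \<alpha> \<subseteq> Phi n m ` Fobj n m \<alpha>"
  proof
    fix d assume "d \<in> Bobj n m \<alpha>"
    then obtain b j where b: "b \<in> Bc n m (nu_pow n j \<alpha>)" and d: "d = clsB n m (b, j)" unfolding Bobj_def by blast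
    obtain s i jj where nj: "nu_pow n j \<alpha> = (s,i,jj)" and r: "1 \<le> i" "i \<le> n" "1 \<le> jj" "jj \<le> m"
      using nu_pow_range[OF n a, of j] by blast
    obtain lam where l: "lam \<in> Xc n m (nu_pow n j \<alpha>)" and bl: "b = hB n m lam"
      using b Bc_img[OF n r, of s] nj by auto
    have "d = Phi n m (clsX n m (lam, j))" using Phi_cls[OF n m, of "(lam,j)"] Xc_sub[OF l] d bl by simp
    moreover have "clsX n m (lam, j) \<in> Fobj n m \<alpha>" using l unfolding Fobj_def by blast
    ultimately show "d \<in> Phi n m ` Fobj n m \<alpha>" by blast
  qed
  show "Phi n m ` Fobj n m \<alpha> \<subseteq> Bobj n m \<alpha>"
  proof
    fix d assume "d \<in> Phi n m ` Fobj n m \<alpha>"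
    then obtain lam j where l: "lam \<in> Xc n m (nu_pow n j \<alpha>)" and d: "d = Phi n m (clsX n m (lam, j))"
      unfolding Fobj_def by blast
    obtain s i jj where nj: "nu_pow n j \<alpha> = (s,i,jj)" and r: "1 \<le> i" "i \<le> n" "1 \<le> jj" "jj \<le> m"
      using nu_pow_range[OF n a, of j] by blast
    have "hB n m lam \<in> Bc n m (nu_pow n j \<alpha>)" using Bc_img[OF n r, of s] nj l by auto
    moreover have "d = clsB n m (hB n m lam, j)" using Phi_cls[OF n m, of "(lam,j)"] Xc_sub[OF l] d by simp
    ultimately show "d \<in> Bobj n m \<alpha>" unfolding Bobj_def by blast
  qed
qed

theorem corollary3p7:
  fixes n m :: nat
  assumes "0 < n" and "n < m"
  shows "\<exists>Fm Bm.
    \<comment> \<open>(a)\<close>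
    Tiso_functor (Delta_iso n m) (XZ n m) (Fobj n m) Fm \<and>
    (\<forall>\<alpha>\<in>Delta_iso n m. \<forall>lam j. lam \<in> Xc n m (nu_pow n j \<alpha>) \<longrightarrow>
        Fm \<alpha> (clsX n m (lam, j)) = clsX n m (t_op n (nu_pow n j \<alpha>) lam, j)) \<and>
    \<comment> \<open>(b)\<close>
    Tiso_functor (Delta_iso n m) (BZ n m) (Bobj n m) Bm \<and>
    (\<forall>\<alpha>\<in>Delta_iso n m. \<forall>b j. b \<in> Bc n m (nu_pow n j \<alpha>) \<longrightarrow>
        Bm \<alpha> (clsB n m (b, j)) = clsB n m (r_op n m (nu_pow n j \<alpha>) b, j)) \<and>
    \<comment> \<open>(c)\<close>
    (\<exists>\<Phi>. (\<forall>\<sigma>\<in>shuffle_set n m. \<forall>k. \<Phi> (clsX n m (zeta n \<sigma>, k)) = clsB n m (borel \<sigma>, k)) \<and>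
        bij_betw \<Phi> (XZ n m) (BZ n m) \<and>
        (\<forall>\<alpha>\<in>Delta_iso n m. \<Phi> ` Fobj n m \<alpha> = Bobj n m \<alpha> \<and>
           (\<forall>c\<in>Fobj n m \<alpha>. \<Phi> (Fm \<alpha> c) = Bm \<alpha> (\<Phi> c))))"
proof -
  have n: "0 < n" using assms(1) .
  have m: "0 < m" using assms by simp
  define Bm where "Bm = (\<lambda>\<alpha> c. Phi n m (FmX n m \<alpha> (inv_into (XZ n m) (Phi n m) c)))"
  have bij: "bij_betw (Phi n m) (XZ n m) (BZ n m)" using Phi_bij[OF n m] .
  have A: "Tiso_functor (Delta_iso n m) (XZ n m) (Fobj n m) (FmX n m)" using partA[OF n m] .
  have Fsub: "\<And>\<alpha>. \<alpha> \<in> Delta_iso n m \<Longrightarrow> Fobj n m \<alpha> \<subseteq> XZ n m"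
    using A unfolding Tiso_functor_def by blast
  have Fmap: "\<And>\<alpha> c. \<alpha> \<in> Delta_iso n m \<Longrightarrow> c \<in> Fobj n m \<alpha> \<Longrightarrow> FmX n m \<alpha> c \<in> Fobj n m (neg_root \<alpha>)"
    using A unfolding Tiso_functor_def bij_betw_def by blast
  have Finv: "\<And>\<alpha> c. \<alpha> \<in> Delta_iso n m \<Longrightarrow> c \<in> Fobj n m \<alpha> \<Longrightarrow> FmX n m (neg_root \<alpha>) (FmX n m \<alpha> c) = c"
    using A unfolding Tiso_functor_def by blast
  have PB: "\<And>\<alpha> c. c \<in> XZ n m \<Longrightarrow> Bm \<alpha> (Phi n m c) = Phi n m (FmX n m \<alpha> c)"
    unfolding Bm_def using bij by (simp add: bij_betw_def inv_into_f_f)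
  have Fval: "\<forall>\<alpha>\<in>Delta_iso n m. \<forall>lam j. lam \<in> Xc n m (nu_pow n j \<alpha>) \<longrightarrow>
        FmX n m \<alpha> (clsX n m (lam, j)) = clsX n m (t_op n (nu_pow n j \<alpha>) lam, j)"
    using FmX_val[OF n m] by blast
  have B: "Tiso_functor (Delta_iso n m) (BZ n m) (Bobj n m) Bm"
  proof (rule Tiso_intro)
    show "\<forall>\<alpha>\<in>Delta_iso n m. neg_root \<alpha> \<in> Delta_iso n m" using neg_Delta by blast
    show "\<forall>\<alpha>\<in>Delta_iso n m. Bobj n m \<alpha> \<subseteq> BZ n m"
      using Bobj_img[OF n m] Fsub bij by (metis bij_betw_imp_surj_on image_mono)
    show "\<forall>\<alpha>\<in>Delta_iso n m. Bm \<alpha> ` Bobj n m \<alpha> \<subseteq> Bobj n m (neg_root \<alpha>)"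
    proof (intro ballI subsetI)
      fix \<alpha> d assume a: "\<alpha> \<in> Delta_iso n m" and "d \<in> Bm \<alpha> ` Bobj n m \<alpha>"
      then obtain c where c: "c \<in> Fobj n m \<alpha>" and d: "d = Bm \<alpha> (Phi n m c)" using Bobj_img[OF n m a] by auto
      have c1: "c \<in> XZ n m" using Fsub[OF a] c by auto
      have "d = Phi n m (FmX n m \<alpha> c)" using d PB[OF c1] by simp
      then show "d \<in> Bobj n m (neg_root \<alpha>)" using Bobj_img[OF n m neg_Delta[OF a]] Fmap[OF a c] by auto
    qed
    show "\<forall>\<alpha>\<in>Delta_iso n m. \<forall>d\<in>Bobj n m \<alpha>. Bm (neg_root \<alpha>) (Bm \<alpha> d) = d"
    proof (intro ballI)
      fix \<alpha> d assume a: "\<alpha> \<in> Delta_iso n m" and "d \<in> Bobj n m \<alpha>"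
      then obtain c where c: "c \<in> Fobj n m \<alpha>" and d: "d = Phi n m c" using Bobj_img[OF n m a] by auto
      have c1: "c \<in> XZ n m" using Fsub[OF a] c by auto
      have c2: "FmX n m \<alpha> c \<in> XZ n m" using Fsub[OF neg_Delta[OF a]] Fmap[OF a c] by auto
      show "Bm (neg_root \<alpha>) (Bm \<alpha> d) = d" using PB[OF c1] PB[OF c2] Finv[OF a c] d by simp
    qed
  qed
  have Bval: "\<forall>\<alpha>\<in>Delta_iso n m. \<forall>b j. b \<in> Bc n m (nu_pow n j \<alpha>) \<longrightarrow>
        Bm \<alpha> (clsB n m (b, j)) = clsB n m (r_op n m (nu_pow n j \<alpha>) b, j)"
  proof (intro ballI allI impI)
    fix \<alpha> b j assume a: "\<alpha> \<in> Delta_iso n m" and b: "b \<in> Bc n m (nu_pow n j \<alpha>)"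
    obtain s i jj where nj: "nu_pow n j \<alpha> = (s,i,jj)" and r: "1 \<le> i" "i \<le> n" "1 \<le> jj" "jj \<le> m"
      using nu_pow_range[OF n a, of j] by blast
    obtain lam where l: "lam \<in> Xc n m (nu_pow n j \<alpha>)" and bl: "b = hB n m lam"
      using b Bc_img[OF n r, of s] nj by auto
    let ?\<sigma> = "inv_into (shuffle_set n m) (zeta n) lam"
    have S: "?\<sigma> \<in> shuffle_set n m" and z: "zeta n ?\<sigma> = lam" using inv_zeta[OF n Xc_sub[OF l]] by auto
    have bs: "b = borel ?\<sigma>" using bl hB_def by simp
    have lA: "(lam, j) \<in> AX n m" using Xc_sub[OF l] by simp
    have sw: "swap_ij i jj ?\<sigma> \<in> shuffle_set n m \<and> zeta n (swap_ij i jj ?\<sigma>) = t_op n (s,i,jj) lam"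
      using swap_op[OF S r, of s] z l nj by simp
    have "zeta n (swap_ij i jj ?\<sigma>) \<in> Xset n m" using zeta_X sw by blast
    then have tA: "(t_op n (s,i,jj) lam, j) \<in> AX n m" using sw by simp
    have "clsB n m (b, j) = Phi n m (clsX n m (lam, j))" using Phi_cls[OF n m lA] bl by simp
    then have "Bm \<alpha> (clsB n m (b, j)) = Phi n m (clsX n m (t_op n (s,i,jj) lam, j))"
      using PB[OF cls_in_XZ[OF lA]] Fval a l nj by simp
    also have "\<dots> = clsB n m (hB n m (t_op n (s,i,jj) lam), j)" using Phi_cls[OF n m tA] by simp
    also have "hB n m (t_op n (s,i,jj) lam) = borel (swap_ij i jj ?\<sigma>)"
      using sw hB_zeta[OF n] by metis
    also have "borel (swap_ij i jj ?\<sigma>) = r_op n m (nu_pow n j \<alpha>) b"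
      using r_op_borel[OF S, of s i jj] nj bs by simp
    finally show "Bm \<alpha> (clsB n m (b, j)) = clsB n m (r_op n m (nu_pow n j \<alpha>) b, j)" .
  qed
  have C: "(\<forall>\<sigma>\<in>shuffle_set n m. \<forall>k. Phi n m (clsX n m (zeta n \<sigma>, k)) = clsB n m (borel \<sigma>, k)) \<and>
        bij_betw (Phi n m) (XZ n m) (BZ n m) \<and>
        (\<forall>\<alpha>\<in>Delta_iso n m. Phi n m ` Fobj n m \<alpha> = Bobj n m \<alpha> \<and>
           (\<forall>c\<in>Fobj n m \<alpha>. Phi n m (FmX n m \<alpha> c) = Bm \<alpha> (Phi n m c)))"
  proof (intro conjI ballI allI)
    fix \<sigma> k assume S: "\<sigma> \<in> shuffle_set n m"
    have "(zeta n \<sigma>, k) \<in> AX n m" using zeta_X[OF S] by simp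
    then show "Phi n m (clsX n m (zeta n \<sigma>, k)) = clsB n m (borel \<sigma>, k)"
      using Phi_cls[OF n m] hB_zeta[OF n S] by simp
  next
    show "bij_betw (Phi n m) (XZ n m) (BZ n m)" by (rule bij)
  next
    fix \<alpha> assume a: "\<alpha> \<in> Delta_iso n m"
    show "Phi n m ` Fobj n m \<alpha> = Bobj n m \<alpha>" using Bobj_img[OF n m a] by simp
  next
    fix \<alpha> c assume a: "\<alpha> \<in> Delta_iso n m" and c: "c \<in> Fobj n m \<alpha>"
    have c1: "c \<in> XZ n m" using Fsub[OF a] c by auto
    show "Phi n m (FmX n m \<alpha> c) = Bm \<alpha> (Phi n m c)" using PB[OF c1] by simp
  qed
  show ?thesis
    apply (rule exI[of _ "FmX n m"], rule exI[of _ Bm])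
    apply (intro conjI)
        apply (rule A)
       apply (rule Fval)
      apply (rule B)
     apply (rule Bval)
    apply (rule exI[of _ "Phi n m"])
    apply (rule C)
    done
qed



end
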